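(* Let $\mathbb{K}$ be a field, $m\ge 3$, $R=\mathbb{K}[T_1,\dots,T_m]$, and $I=\langle T_1^{a_1},\dots,T_m^{a_m},T_1^{b_1}\cdots T_m^{b_m}\rangle$ with $0\le b_i<a_i$ for all $i$, $b_i\ne0$ for at least two $i$, and additionally $|\mathbf{b}|=b_1+\cdots+b_m\le\min(a_1,\dots,a_m)$. Let $L\subset S=R[X_1,\dots,X_m,W]$ be the defining ideal of the Rees algebra of $I$. Then $\Gamma_0\cup\Gamma_3$, where $$\Gamma_0=\{\mathcal{P}(X_i,X_j)\mid 1\le j<i\le m+1\},\qquad \Gamma_3=\{\mathcal{P}(W^{|\mathbf{c}|},\mathbf{X}^{\mathbf{c}})\mid \mathbf{0}\ne\mathbf{c}\in\mathbb{N}^m,\ c_i\le b_i\text{ for all }i\},$$ is a (not necessarily reduced) Gröbner basis of $L$ with respect to $\tau$. In particular, $\operatorname{reltype}(I)\le|\mathbf{b}|$.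
   Context: Write $\mathbf{T}^{\mathbf{b}}=T_1^{b_1}\cdots T_m^{b_m}$. $L$ is the kernel of the $R$-algebra map $S\to R[Z]$, $X_i\mapsto T_i^{a_i}Z$, $W\mapsto\mathbf{T}^{\mathbf{b}}Z$; it is graded by total degree in $X_1,\dots,X_m,W$, $L=\bigoplus_{i\ge1}L_i$. Set $X_{m+1}:=W$; for $\mathbf{c}\in\mathbb{N}^m$, $\mathbf{X}^{\mathbf{c}}=\prod X_i^{c_i}$, $|\mathbf{c}|=\sum c_i$. Let $\Psi:S\to R$ be the $R$-algebra map $X_i\mapsto T_i^{a_i}$, $W\mapsto\mathbf{T}^{\mathbf{b}}$. For monomials $M,N$ in $X_1,\dots,X_m,W$, with $g=\gcd(\Psi(M),\Psi(N))$, set $\mathcal{P}(M,N)=\frac{\Psi(N)}{g}M-\frac{\Psi(M)}{g}N$. The order $\tau$ is lex on $S$ with $W>X_m>\cdots>X_1>T_1>\cdots>T_m$. The relation type is $\operatorname{reltype}(I)=\inf\{s\mid L=\langle L_1,\dots,L_s\rangle\}$. *)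

theory Defs
  imports Main "HOL-Library.Poly_Mapping" "HOL-Library.Extended_Nat"
begin

text \<open>Variables: TV k is T_k (1 <= k <= m), XV i is X_i (1 <= i <= m+1), where
  XV (m+1) plays the role of W = X_(m+1); ZV is the auxiliary variable Z of R[Z].\<close>
datatype var = TV nat | XV nat | ZV

type_synonym mon = "var \<Rightarrow>\<^sub>0 nat"
type_synonym 'k mpoly = "mon \<Rightarrow>\<^sub>0 'k"

definition mvar :: "var \<Rightarrow> 'k::comm_ring_1 mpoly" where
  "mvar v = Poly_Mapping.single (Poly_Mapping.single v 1) 1"

definition monom :: "mon \<Rightarrow> 'k::comm_ring_1 mpoly" where
  "monom \<alpha> = Poly_Mapping.single \<alpha> 1"

definition cst :: "'k::comm_ring_1 \<Rightarrow> 'k mpoly" where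
  "cst c = Poly_Mapping.single 0 c"

definition poly_subst :: "(var \<Rightarrow> 'k::comm_ring_1 mpoly) \<Rightarrow> 'k mpoly \<Rightarrow> 'k mpoly" where
  "poly_subst \<sigma> p = (\<Sum>mu\<in>Poly_Mapping.keys p. cst (Poly_Mapping.lookup p mu) * (\<Prod>v\<in>Poly_Mapping.keys mu. \<sigma> v ^ Poly_Mapping.lookup mu v))"

definition tmon :: "nat \<Rightarrow> (nat \<Rightarrow> nat) \<Rightarrow> mon" where
  "tmon m e = (\<Sum>k\<in>{1..m}. Poly_Mapping.single (TV k) (e k))"

fun valid_var :: "nat \<Rightarrow> var \<Rightarrow> bool" where
  "valid_var m (TV k) = (1 \<le> k \<and> k \<le> m)"
| "valid_var m (XV i) = (1 \<le> i \<and> i \<le> m + 1)"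
| "valid_var m ZV = False"

definition S_ring :: "nat \<Rightarrow> 'k::comm_ring_1 mpoly set" where
  "S_ring m = {f. \<forall>\<mu>\<in>Poly_Mapping.keys f. \<forall>v\<in>Poly_Mapping.keys \<mu>. valid_var m v}"

fun rees_map :: "nat \<Rightarrow> (nat \<Rightarrow> nat) \<Rightarrow> (nat \<Rightarrow> nat) \<Rightarrow> var \<Rightarrow> 'k::comm_ring_1 mpoly" where
  "rees_map m a b (TV k) = mvar (TV k)"
| "rees_map m a b (XV i) =
     (if i \<le> m then monom (Poly_Mapping.single (TV i) (a i) + Poly_Mapping.single ZV 1)
      else monom (tmon m b + Poly_Mapping.single ZV 1))"
| "rees_map m a b ZV = mvar ZV"

definition rees_ideal :: "nat \<Rightarrow> (nat \<Rightarrow> nat) \<Rightarrow> (nat \<Rightarrow> nat) \<Rightarrow> 'k::comm_ring_1 mpoly set" where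
  "rees_ideal m a b = {f \<in> S_ring m. poly_subst (rees_map m a b) f = 0}"

definition degXW :: "nat \<Rightarrow> mon \<Rightarrow> nat" where
  "degXW m \<mu> = (\<Sum>i\<in>{1..m+1}. Poly_Mapping.lookup \<mu> (XV i))"

definition graded_part :: "nat \<Rightarrow> 'k::comm_ring_1 mpoly set \<Rightarrow> nat \<Rightarrow> 'k mpoly set" where
  "graded_part m L i = {f \<in> L. \<forall>\<mu>\<in>Poly_Mapping.keys f. degXW m \<mu> = i}"

definition gen_ideal :: "'k::comm_ring_1 mpoly set \<Rightarrow> 'k mpoly set \<Rightarrow> 'k mpoly set" where
  "gen_ideal S A = {f. \<exists>(n::nat) r g. (\<forall>k<n. r k \<in> S \<and> g k \<in> A) \<and> f = (\<Sum>k<n. r k * g k)}"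

definition reltype :: "nat \<Rightarrow> (nat \<Rightarrow> nat) \<Rightarrow> (nat \<Rightarrow> nat) \<Rightarrow> 'k::comm_ring_1 itself \<Rightarrow> enat" where
  "reltype m a b (_::'k itself) =
     (INF s\<in>{s::nat. (rees_ideal m a b :: 'k mpoly set)
                = gen_ideal (S_ring m) (\<Union>i\<in>{1..s}. graded_part m (rees_ideal m a b) i)}. enat s)"

text \<open>Variable order of tau: W > X_m > ... > X_1 > T_1 > ... > T_m (Z smallest, irrelevant).\<close>
fun var_gt :: "var \<Rightarrow> var \<Rightarrow> bool" where
  "var_gt (XV i) (XV j) = (j < i)"
| "var_gt (XV i) (TV k) = True"
| "var_gt (XV i) ZV = True"
| "var_gt (TV k) (XV i) = False"
| "var_gt (TV k) (TV l) = (k < l)"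
| "var_gt (TV k) ZV = True"
| "var_gt ZV _ = False"

definition lex_less :: "mon \<Rightarrow> mon \<Rightarrow> bool" where
  "lex_less \<alpha> \<beta> = (\<exists>v. Poly_Mapping.lookup \<alpha> v < Poly_Mapping.lookup \<beta> v \<and> (\<forall>u. var_gt u v \<longrightarrow> Poly_Mapping.lookup \<alpha> u = Poly_Mapping.lookup \<beta> u))"

definition lead_mon :: "'k::comm_ring_1 mpoly \<Rightarrow> mon" where
  "lead_mon f = (THE \<alpha>. \<alpha> \<in> Poly_Mapping.keys f \<and> (\<forall>\<beta>\<in>Poly_Mapping.keys f. \<beta> \<noteq> \<alpha> \<longrightarrow> lex_less \<beta> \<alpha>))"

definition mon_dvd :: "mon \<Rightarrow> mon \<Rightarrow> bool" where
  "mon_dvd \<alpha> \<beta> = (\<forall>v. Poly_Mapping.lookup \<alpha> v \<le> Poly_Mapping.lookup \<beta> v)"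

definition is_groebner_basis :: "'k::comm_ring_1 mpoly set \<Rightarrow> 'k mpoly set \<Rightarrow> bool" where
  "is_groebner_basis G L = (finite G \<and> G \<subseteq> L \<and>
     (\<forall>f\<in>L. f \<noteq> 0 \<longrightarrow> (\<exists>g\<in>G. g \<noteq> 0 \<and> mon_dvd (lead_mon g) (lead_mon f))))"

definition psi_exp :: "nat \<Rightarrow> (nat \<Rightarrow> nat) \<Rightarrow> (nat \<Rightarrow> nat) \<Rightarrow> mon \<Rightarrow> nat \<Rightarrow> nat" where
  "psi_exp m a b \<mu> k = Poly_Mapping.lookup \<mu> (XV k) * a k + Poly_Mapping.lookup \<mu> (XV (m+1)) * b k"

text \<open>P(M,N) = (Psi(N)/g) M - (Psi(M)/g) N with g = gcd(Psi(M),Psi(N)).\<close>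
definition Pcal :: "nat \<Rightarrow> (nat \<Rightarrow> nat) \<Rightarrow> (nat \<Rightarrow> nat) \<Rightarrow> mon \<Rightarrow> mon \<Rightarrow> 'k::comm_ring_1 mpoly" where
  "Pcal m a b M N =
     (let pM = psi_exp m a b M; pN = psi_exp m a b N; g = (\<lambda>k. min (pM k) (pN k)) in
      monom (tmon m (\<lambda>k. pN k - g k) + M) - monom (tmon m (\<lambda>k. pM k - g k) + N))"

definition Xmon :: "nat \<Rightarrow> mon" where
  "Xmon i = Poly_Mapping.single (XV i) 1"

definition Gamma0 :: "nat \<Rightarrow> (nat \<Rightarrow> nat) \<Rightarrow> (nat \<Rightarrow> nat) \<Rightarrow> 'k::comm_ring_1 mpoly set" where
  "Gamma0 m a b = {Pcal m a b (Xmon i) (Xmon j) | i j. 1 \<le> j \<and> j < i \<and> i \<le> m + 1}"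

definition Gamma3 :: "nat \<Rightarrow> (nat \<Rightarrow> nat) \<Rightarrow> (nat \<Rightarrow> nat) \<Rightarrow> 'k::comm_ring_1 mpoly set" where
  "Gamma3 m a b = {Pcal m a b (Poly_Mapping.single (XV (m+1)) (\<Sum>i\<in>{1..m}. c i))
                               (\<Sum>i\<in>{1..m}. Poly_Mapping.single (XV i) (c i))
                   | c. (\<exists>i\<in>{1..m}. c i \<noteq> 0) \<and> (\<forall>i\<in>{1..m}. c i \<le> b i)}"

end

theory Submission
  imports Defs "HOL-Library.FuncSet"
begin
section \<open>Variable order and lex order\<close>

lemma var_gt_irrefl: "\<not> var_gt v v"
  by (cases v) auto

lemma var_gt_trans: "var_gt u v \<Longrightarrow> var_gt v w \<Longrightarrow> var_gt u w"
  by (cases u; cases v; cases w) auto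

lemma var_gt_total: "u \<noteq> v \<Longrightarrow> var_gt u v \<or> var_gt v u"
  by (cases u; cases v) auto

lemma var_gt_asym: "var_gt u v \<Longrightarrow> \<not> var_gt v u"
  using var_gt_irrefl var_gt_trans by blast

lemma ex_max_var:
  assumes "finite D" "D \<noteq> {}"
  shows "\<exists>v\<in>D. \<forall>u\<in>D. \<not> var_gt u v"
  using assms
proof (induction D rule: finite_ne_induct)
  case (singleton x) then show ?case by (simp add: var_gt_irrefl)
next
  case (insert x F)
  then obtain v where v: "v \<in> F" "\<forall>u\<in>F. \<not> var_gt u v" by blast
  show ?case
  proof (cases "var_gt x v")
    case True
    have "\<forall>u\<in>insert x F. \<not> var_gt u x"
    proof
      fix u assume "u \<in> insert x F"
      then consider "u = x" | "u \<in> F" by blast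
      then show "\<not> var_gt u x"
      proof cases
        case 1 then show ?thesis by (simp add: var_gt_irrefl)
      next
        case 2
        show ?thesis
        proof
          assume "var_gt u x"
          then have "var_gt u v" using True var_gt_trans by blast
          then show False using v 2 by blast
        qed
      qed
    qed
    then show ?thesis by blast
  next
    case False
    then show ?thesis using v by blast
  qed
qed

lemma lex_less_irrefl: "\<not> lex_less \<alpha> \<alpha>"
  unfolding lex_less_def by auto

lemma lex_less_asym: "lex_less \<alpha> \<beta> \<Longrightarrow> \<not> lex_less \<beta> \<alpha>"
  unfolding lex_less_def
proof (elim exE conjE, rule notI, elim exE conjE)
  fix v1 v2
  assume a: "Poly_Mapping.lookup \<alpha> v1 < Poly_Mapping.lookup \<beta> v1" "\<forall>u. var_gt u v1 \<longrightarrow> Poly_Mapping.lookup \<alpha> u = Poly_Mapping.lookup \<beta> u"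
     and b: "Poly_Mapping.lookup \<beta> v2 < Poly_Mapping.lookup \<alpha> v2" "\<forall>u. var_gt u v2 \<longrightarrow> Poly_Mapping.lookup \<beta> u = Poly_Mapping.lookup \<alpha> u"
  consider "v1 = v2" | "var_gt v1 v2" | "var_gt v2 v1" using var_gt_total by blast
  then show False
  proof cases
    case 1 then show ?thesis using a(1) b(1) by (metis less_asym)
  next
    case 2 then have "Poly_Mapping.lookup \<beta> v1 = Poly_Mapping.lookup \<alpha> v1" using b by blast
    then show ?thesis using a by simp
  next
    case 3 then have "Poly_Mapping.lookup \<alpha> v2 = Poly_Mapping.lookup \<beta> v2" using a by blast
    then show ?thesis using b by simp
  qed
qed

lemma lex_less_trans: "lex_less \<alpha> \<beta> \<Longrightarrow> lex_less \<beta> \<gamma> \<Longrightarrow> lex_less \<alpha> \<gamma>"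
  unfolding lex_less_def
proof (elim exE conjE)
  fix v1 v2
  assume a: "Poly_Mapping.lookup \<alpha> v1 < Poly_Mapping.lookup \<beta> v1" "\<forall>u. var_gt u v1 \<longrightarrow> Poly_Mapping.lookup \<alpha> u = Poly_Mapping.lookup \<beta> u"
     and b: "Poly_Mapping.lookup \<beta> v2 < Poly_Mapping.lookup \<gamma> v2" "\<forall>u. var_gt u v2 \<longrightarrow> Poly_Mapping.lookup \<beta> u = Poly_Mapping.lookup \<gamma> u"
  show "\<exists>v. Poly_Mapping.lookup \<alpha> v < Poly_Mapping.lookup \<gamma> v \<and> (\<forall>u. var_gt u v \<longrightarrow> Poly_Mapping.lookup \<alpha> u = Poly_Mapping.lookup \<gamma> u)"
  proof (cases "v1 = v2")
    case True
    have "Poly_Mapping.lookup \<alpha> v1 < Poly_Mapping.lookup \<gamma> v1" using a(1) b(1) True by (metis less_trans)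
    moreover have "\<forall>u. var_gt u v1 \<longrightarrow> Poly_Mapping.lookup \<alpha> u = Poly_Mapping.lookup \<gamma> u" using a(2) b(2) True by simp
    ultimately show ?thesis by blast
  next
    case False
    then consider "var_gt v1 v2" | "var_gt v2 v1" using var_gt_total by blast
    then show ?thesis
    proof cases
      case 1
      have "Poly_Mapping.lookup \<beta> v1 = Poly_Mapping.lookup \<gamma> v1" using b 1 by blast
      moreover have "\<forall>u. var_gt u v1 \<longrightarrow> Poly_Mapping.lookup \<alpha> u = Poly_Mapping.lookup \<gamma> u"
      proof (intro allI impI)
        fix u assume u: "var_gt u v1"
        then have "var_gt u v2" using 1 var_gt_trans by blast
        then show "Poly_Mapping.lookup \<alpha> u = Poly_Mapping.lookup \<gamma> u" using a(2) b(2) u by simp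
      qed
      ultimately show ?thesis using a by (intro exI[of _ v1]) simp
    next
      case 2
      have "Poly_Mapping.lookup \<alpha> v2 = Poly_Mapping.lookup \<beta> v2" using a 2 by blast
      moreover have "\<forall>u. var_gt u v2 \<longrightarrow> Poly_Mapping.lookup \<alpha> u = Poly_Mapping.lookup \<gamma> u"
      proof (intro allI impI)
        fix u assume u: "var_gt u v2"
        then have "var_gt u v1" using 2 var_gt_trans by blast
        then show "Poly_Mapping.lookup \<alpha> u = Poly_Mapping.lookup \<gamma> u" using a(2) b(2) u by simp
      qed
      ultimately show ?thesis using b by (intro exI[of _ v2]) simp
    qed
  qed
qed

lemma lex_less_total: "\<alpha> \<noteq> \<beta> \<Longrightarrow> lex_less \<alpha> \<beta> \<or> lex_less \<beta> \<alpha>"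
proof -
  assume ne: "\<alpha> \<noteq> \<beta>"
  let ?D = "{v. Poly_Mapping.lookup \<alpha> v \<noteq> Poly_Mapping.lookup \<beta> v}"
  have "?D \<subseteq> Poly_Mapping.keys \<alpha> \<union> Poly_Mapping.keys \<beta>" 
  proof
    fix x assume "x \<in> ?D"
    then show "x \<in> Poly_Mapping.keys \<alpha> \<union> Poly_Mapping.keys \<beta>" by (cases "x \<in> Poly_Mapping.keys \<alpha>") (auto simp: in_keys_iff)
  qed
  then have fin: "finite ?D" by (rule finite_subset) auto
  have "?D \<noteq> {}"
  proof
    assume "?D = {}"
    then have "\<And>k. Poly_Mapping.lookup \<alpha> k = Poly_Mapping.lookup \<beta> k" by (simp add: Collect_empty_eq)
    then have "\<alpha> = \<beta>" by (rule poly_mapping_eqI)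
    then show False using ne by simp
  qed
  then obtain v where v: "v \<in> ?D" "\<forall>u\<in>?D. \<not> var_gt u v" using ex_max_var[OF fin] by blast
  then have eq: "\<forall>u. var_gt u v \<longrightarrow> Poly_Mapping.lookup \<alpha> u = Poly_Mapping.lookup \<beta> u" by blast
  show ?thesis
  proof (cases "Poly_Mapping.lookup \<alpha> v < Poly_Mapping.lookup \<beta> v")
    case True then show ?thesis unfolding lex_less_def using eq by blast
  next
    case False then have "Poly_Mapping.lookup \<beta> v < Poly_Mapping.lookup \<alpha> v" using v by auto
    then show ?thesis unfolding lex_less_def using eq by (intro disjI2 exI[of _ v]) simp
  qed
qed

lemma ex_lex_max:
  assumes "finite K" "K \<noteq> {}"
  shows "\<exists>A\<in>K. \<forall>B\<in>K. B \<noteq> A \<longrightarrow> lex_less B A"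
  using assms
proof (induction K rule: finite_ne_induct)
  case (singleton x) then show ?case by simp
next
  case (insert x F)
  then obtain A where A: "A \<in> F" "\<forall>B\<in>F. B \<noteq> A \<longrightarrow> lex_less B A" by blast
  have "x \<noteq> A" using insert A by auto
  then consider "lex_less x A" | "lex_less A x" using lex_less_total by blast
  then show ?case
  proof cases
    case 1 then show ?thesis using A by auto
  next
    case 2
    have "\<forall>B\<in>insert x F. B \<noteq> x \<longrightarrow> lex_less B x"
    proof (intro ballI impI)
      fix B assume "B \<in> insert x F" "B \<noteq> x"
      then have "B \<in> F" by simp
      show "lex_less B x"
      proof (cases "B = A")
        case True then show ?thesis using 2 by simp
      next
        case False then have "lex_less B A" using A \<open>B \<in> F\<close> by blast
        then show ?thesis using 2 lex_less_trans by blast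
      qed
    qed
    then show ?thesis by blast
  qed
qed

lemma lead_mon_eqI:
  assumes "A \<in> Poly_Mapping.keys f" "\<forall>B\<in>Poly_Mapping.keys f. B \<noteq> A \<longrightarrow> lex_less B A"
  shows "lead_mon f = A"
  unfolding lead_mon_def
proof (rule the_equality)
  show "A \<in> Poly_Mapping.keys f \<and> (\<forall>B\<in>Poly_Mapping.keys f. B \<noteq> A \<longrightarrow> lex_less B A)" using assms by simp
next
  fix A' assume "A' \<in> Poly_Mapping.keys f \<and> (\<forall>B\<in>Poly_Mapping.keys f. B \<noteq> A' \<longrightarrow> lex_less B A')"
  note h = this
  show "A' = A"
  proof (rule ccontr)
    assume ne: "A' \<noteq> A"
    have 1: "lex_less A A'" using h assms(1) ne by auto
    have 2: "lex_less A' A" using assms(2) h ne by auto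
    show False using lex_less_asym[OF 1] 2 by simp
  qed
qed

lemma lead_mon_prop:
  assumes "f \<noteq> 0"
  shows "lead_mon f \<in> Poly_Mapping.keys f \<and> (\<forall>B\<in>Poly_Mapping.keys f. B \<noteq> lead_mon f \<longrightarrow> lex_less B (lead_mon f))"
proof -
  have "Poly_Mapping.keys f \<noteq> {}"
  proof
    assume "Poly_Mapping.keys f = {}"
    have "\<And>k. Poly_Mapping.lookup f k = Poly_Mapping.lookup 0 k"
    proof -
      fix k
      have "k \<notin> Poly_Mapping.keys f" using \<open>Poly_Mapping.keys f = {}\<close> by simp
      then show "Poly_Mapping.lookup f k = Poly_Mapping.lookup 0 k" by (simp add: in_keys_iff)
    qed
    then have "f = 0" by (rule poly_mapping_eqI)
    then show False using assms by simp
  qed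
  then obtain A where A: "A \<in> Poly_Mapping.keys f" "\<forall>B\<in>Poly_Mapping.keys f. B \<noteq> A \<longrightarrow> lex_less B A"
    using ex_lex_max[of "Poly_Mapping.keys f"] by auto
  then have "lead_mon f = A" by (rule lead_mon_eqI)
  then show ?thesis using A by simp
qed

section \<open>The monomial map phi\<close>

fun img :: "nat \<Rightarrow> (nat \<Rightarrow> nat) \<Rightarrow> (nat \<Rightarrow> nat) \<Rightarrow> var \<Rightarrow> mon" where
  "img m a b (TV k) = Poly_Mapping.single (TV k) 1"
| "img m a b (XV i) = (if i \<le> m then Poly_Mapping.single (TV i) (a i) + Poly_Mapping.single ZV 1
                       else tmon m b + Poly_Mapping.single ZV 1)"
| "img m a b ZV = Poly_Mapping.single ZV 1"

lemma rees_map_img: "rees_map m a b v = Poly_Mapping.single (img m a b v) 1"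
  by (cases v) (simp_all add: mvar_def monom_def)

definition nsc :: "nat \<Rightarrow> mon \<Rightarrow> mon" where
  "nsc n \<alpha> = Poly_Mapping.map ((*) n) \<alpha>"

lemma lookup_nsc: "Poly_Mapping.lookup (nsc n \<alpha>) x = n * Poly_Mapping.lookup \<alpha> x"
  by (simp add: nsc_def Poly_Mapping.map.rep_eq when_def)

definition phi :: "nat \<Rightarrow> (nat \<Rightarrow> nat) \<Rightarrow> (nat \<Rightarrow> nat) \<Rightarrow> mon \<Rightarrow> mon" where
  "phi m a b \<mu> = (\<Sum>v\<in>Poly_Mapping.keys \<mu>. nsc (Poly_Mapping.lookup \<mu> v) (img m a b v))"

lemma single_pow: "(Poly_Mapping.single \<alpha> (1::'k::comm_ring_1)) ^ n = Poly_Mapping.single (nsc n \<alpha>) 1"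
proof (induction n)
  case 0
  have "nsc 0 \<alpha> = 0" by (rule poly_mapping_eqI) (simp add: lookup_nsc)
  then show ?case by simp
next
  case (Suc n)
  have "\<alpha> + nsc n \<alpha> = nsc (Suc n) \<alpha>" by (rule poly_mapping_eqI) (simp add: lookup_nsc lookup_add)
  then show ?case using Suc by (simp add: mult_single)
qed

lemma prod_single:
  assumes "finite K"
  shows "(\<Prod>v\<in>K. Poly_Mapping.single (f v) (1::'k::comm_ring_1)) = Poly_Mapping.single (\<Sum>v\<in>K. f v) 1"
  using assms by (induction K rule: finite_induct) (simp_all add: mult_single)

definition Psi :: "nat \<Rightarrow> (nat \<Rightarrow> nat) \<Rightarrow> (nat \<Rightarrow> nat) \<Rightarrow> 'k::comm_ring_1 mpoly \<Rightarrow> 'k mpoly" where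
  "Psi m a b p = (\<Sum>\<mu>\<in>Poly_Mapping.keys p. Poly_Mapping.single (phi m a b \<mu>) (Poly_Mapping.lookup p \<mu>))"

lemma poly_subst_Psi: "poly_subst (rees_map m a b) p = Psi m a b p"
  unfolding poly_subst_def Psi_def
proof (rule sum.cong[OF refl])
  fix \<mu> assume "\<mu> \<in> Poly_Mapping.keys p"
  have "(\<Prod>v\<in>Poly_Mapping.keys \<mu>. rees_map m a b v ^ Poly_Mapping.lookup \<mu> v)
      = (\<Prod>v\<in>Poly_Mapping.keys \<mu>. Poly_Mapping.single (nsc (Poly_Mapping.lookup \<mu> v) (img m a b v)) 1)"
    by (simp add: rees_map_img single_pow)
  also have "\<dots> = Poly_Mapping.single (phi m a b \<mu>) 1"
    by (simp add: prod_single phi_def)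
  finally have eq: "(\<Prod>v\<in>Poly_Mapping.keys \<mu>. rees_map m a b v ^ Poly_Mapping.lookup \<mu> v) = Poly_Mapping.single (phi m a b \<mu>) 1" .
  show "cst (Poly_Mapping.lookup p \<mu>) * (\<Prod>v\<in>Poly_Mapping.keys \<mu>. rees_map m a b v ^ Poly_Mapping.lookup \<mu> v)
      = Poly_Mapping.single (phi m a b \<mu>) (Poly_Mapping.lookup p \<mu>)"
    unfolding eq cst_def by (simp add: mult_single)
qed

lemma Psi_add: "Psi m a b (p + q) = Psi m a b p + Psi m a b q"
  unfolding Psi_def
  by (rule setsum_keys_plus_distrib) (simp_all add: single_add)

lemma Psi_zero[simp]: "Psi m a b 0 = 0"
  by (simp add: Psi_def)

lemma Psi_single: "Psi m a b (Poly_Mapping.single \<mu> c) = Poly_Mapping.single (phi m a b \<mu>) c"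
  by (cases "c = 0") (simp_all add: Psi_def)

lemma Psi_diff: "Psi m a b (p - q) = Psi m a b p - Psi m a b q"
proof -
  have "Psi m a b (p - q) + Psi m a b q = Psi m a b p"
    using Psi_add[of m a b "p - q" q] by simp
  then show ?thesis by (simp add: eq_diff_eq)
qed

lemma lookup_phi_gen:
  assumes "finite K" "Poly_Mapping.keys \<mu> \<subseteq> K"
  shows "Poly_Mapping.lookup (phi m a b \<mu>) x
        = (\<Sum>v\<in>K. Poly_Mapping.lookup \<mu> v * Poly_Mapping.lookup (img m a b v) x)"
proof -
  have "Poly_Mapping.lookup (phi m a b \<mu>) x
        = (\<Sum>v\<in>Poly_Mapping.keys \<mu>. Poly_Mapping.lookup \<mu> v * Poly_Mapping.lookup (img m a b v) x)"
    by (simp add: phi_def lookup_sum lookup_nsc)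
  also have "\<dots> = (\<Sum>v\<in>K. Poly_Mapping.lookup \<mu> v * Poly_Mapping.lookup (img m a b v) x)"
    by (rule sum.mono_neutral_left) (use assms in \<open>auto simp: in_keys_iff\<close>)
  finally show ?thesis .
qed

lemma phi_add: "phi m a b (\<mu> + \<nu>) = phi m a b \<mu> + phi m a b \<nu>"
proof (rule poly_mapping_eqI)
  fix x
  let ?K = "Poly_Mapping.keys \<mu> \<union> Poly_Mapping.keys \<nu>"
  have fin: "finite ?K" by simp
  have k: "Poly_Mapping.keys (\<mu> + \<nu>) \<subseteq> ?K" by (rule keys_add)
  show "Poly_Mapping.lookup (phi m a b (\<mu> + \<nu>)) x = Poly_Mapping.lookup (phi m a b \<mu> + phi m a b \<nu>) x"
    unfolding lookup_add
    by (simp add: lookup_phi_gen[OF fin k] lookup_phi_gen[OF fin] lookup_add algebra_simps sum.distrib)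
qed

lemma update_as_add:
  assumes "k \<notin> Poly_Mapping.keys f"
  shows "Poly_Mapping.update k v f = f + Poly_Mapping.single k v"
proof (rule poly_mapping_eqI)
  fix x
  have "Poly_Mapping.lookup f k = 0" using assms by (simp add: in_keys_iff)
  then show "Poly_Mapping.lookup (Poly_Mapping.update k v f) x = Poly_Mapping.lookup (f + Poly_Mapping.single k v) x"
    by (auto simp add: lookup_update lookup_add lookup_single when_def)
qed

lemma Psi_single_mult:
  "Psi m a b (Poly_Mapping.single \<mu> c * q) = Poly_Mapping.single (phi m a b \<mu>) c * Psi m a b (q::'k::comm_ring_1 mpoly)"
proof (induction q rule: update_induct)
  case const then show ?case by simp
next
  case (update f k v)
  have "Psi m a b (Poly_Mapping.single \<mu> c * Poly_Mapping.update k v f)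
      = Psi m a b (Poly_Mapping.single \<mu> c * f) + Poly_Mapping.single (phi m a b \<mu> + phi m a b k) (c * v)"
    using update(1) by (simp add: update_as_add distrib_left Psi_add mult_single Psi_single phi_add)
  also have "\<dots> = Poly_Mapping.single (phi m a b \<mu>) c * Psi m a b (Poly_Mapping.update k v f)"
    using update by (simp add: update_as_add distrib_left Psi_add mult_single Psi_single)
  finally show ?case .
qed

lemma Psi_mult:
  "Psi m a b (p * q) = Psi m a b p * Psi m a b (q::'k::comm_ring_1 mpoly)"
proof (induction p rule: update_induct)
  case const then show ?case by simp
next
  case (update f k v)
  then show ?case
    by (simp add: update_as_add distrib_right Psi_add Psi_single_mult Psi_single)
qed

definition validmon :: "nat \<Rightarrow> mon \<Rightarrow> bool" where
  "validmon m \<mu> = (\<forall>v\<in>Poly_Mapping.keys \<mu>. valid_var m v)"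

definition hX :: "nat \<Rightarrow> mon \<Rightarrow> nat" where
  "hX m \<mu> = (\<Sum>i\<in>{1..m+1}. i * Poly_Mapping.lookup \<mu> (XV i))"

lemma lookup_single_var: "Poly_Mapping.lookup (Poly_Mapping.single v n) x = (if v = x then n else 0)"
  by (simp add: lookup_single when_def)

lemma lookup_tmon_TV: "Poly_Mapping.lookup (tmon m e) (TV k) = (if k \<in> {1..m} then e k else 0)"
  by (simp add: tmon_def lookup_sum lookup_single_var)

lemma lookup_tmon_XV: "Poly_Mapping.lookup (tmon m e) (XV k) = 0"
  by (simp add: tmon_def lookup_sum lookup_single_var)

lemma lookup_tmon_ZV: "Poly_Mapping.lookup (tmon m e) ZV = 0"
  by (simp add: tmon_def lookup_sum lookup_single_var)

lemma tmon_cong: "(\<And>k. k \<in> {1..m} \<Longrightarrow> e k = e' k) \<Longrightarrow> tmon m e = tmon m e'"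
  unfolding tmon_def by (rule sum.cong) auto

lemma validmon_lookup:
  assumes "validmon m \<mu>" "\<not> valid_var m v"
  shows "Poly_Mapping.lookup \<mu> v = 0"
  using assms unfolding validmon_def by (auto simp: in_keys_iff)

lemma validmon_keys: "validmon m \<mu> \<Longrightarrow> Poly_Mapping.keys \<mu> \<subseteq> TV ` {1..m} \<union> XV ` {1..m+1}"
  unfolding validmon_def
proof
  fix v assume "\<forall>v\<in>Poly_Mapping.keys \<mu>. valid_var m v" "v \<in> Poly_Mapping.keys \<mu>"
  then have "valid_var m v" by blast
  then show "v \<in> TV ` {1..m} \<union> XV ` {1..m+1}" by (cases v) auto
qed

lemma sum_V:
  "(\<Sum>v\<in>TV ` {1..m} \<union> XV ` {1..m+1}. f v) = (\<Sum>k\<in>{1..m}. f (TV k)) + (\<Sum>i\<in>{1..m+1}. f (XV i))"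
proof -
  have "(\<Sum>v\<in>TV ` {1..m} \<union> XV ` {1..m+1}. f v) = (\<Sum>v\<in>TV ` {1..m}. f v) + (\<Sum>v\<in>XV ` {1..m+1}. f v)"
    by (rule sum.union_disjoint) auto
  also have "(\<Sum>v\<in>TV ` {1..m}. f v) = (\<Sum>k\<in>{1..m}. f (TV k))"
    by (rule sum.reindex_cong[of TV]) (auto simp: inj_on_def)
  also have "(\<Sum>v\<in>XV ` {1..m+1}. f v) = (\<Sum>i\<in>{1..m+1}. f (XV i))"
    by (rule sum.reindex_cong[of XV]) (auto simp: inj_on_def)
  finally show ?thesis .
qed

lemma lookup_phi_V:
  assumes "validmon m \<mu>"
  shows "Poly_Mapping.lookup (phi m a b \<mu>) x
     = (\<Sum>k\<in>{1..m}. Poly_Mapping.lookup \<mu> (TV k) * Poly_Mapping.lookup (img m a b (TV k)) x)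
     + (\<Sum>i\<in>{1..m}. Poly_Mapping.lookup \<mu> (XV i) * Poly_Mapping.lookup (img m a b (XV i)) x)
     + Poly_Mapping.lookup \<mu> (XV (m+1)) * Poly_Mapping.lookup (tmon m b + Poly_Mapping.single ZV 1) x"
proof -
  have "Poly_Mapping.lookup (phi m a b \<mu>) x
     = (\<Sum>v\<in>TV ` {1..m} \<union> XV ` {1..m+1}. Poly_Mapping.lookup \<mu> v * Poly_Mapping.lookup (img m a b v) x)"
    by (rule lookup_phi_gen) (use validmon_keys[OF assms] in auto)
  also have "\<dots> = (\<Sum>k\<in>{1..m}. Poly_Mapping.lookup \<mu> (TV k) * Poly_Mapping.lookup (img m a b (TV k)) x)
     + (\<Sum>i\<in>{1..m+1}. Poly_Mapping.lookup \<mu> (XV i) * Poly_Mapping.lookup (img m a b (XV i)) x)"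
    by (rule sum_V)
  also have "(\<Sum>i\<in>{1..m+1}. Poly_Mapping.lookup \<mu> (XV i) * Poly_Mapping.lookup (img m a b (XV i)) x)
     = (\<Sum>i\<in>{1..m}. Poly_Mapping.lookup \<mu> (XV i) * Poly_Mapping.lookup (img m a b (XV i)) x)
     + Poly_Mapping.lookup \<mu> (XV (m+1)) * Poly_Mapping.lookup (tmon m b + Poly_Mapping.single ZV 1) x"
    by simp
  finally show ?thesis by (simp only: add.assoc)
qed

lemma lookup_phi_TV:
  assumes "validmon m \<mu>"
  shows "Poly_Mapping.lookup (phi m a b \<mu>) (TV j)
     = (if j \<in> {1..m} then Poly_Mapping.lookup \<mu> (TV j) + psi_exp m a b \<mu> j else 0)"
proof -
  have 1: "(\<Sum>k\<in>{1..m}. Poly_Mapping.lookup \<mu> (TV k) * Poly_Mapping.lookup (img m a b (TV k)) (TV j))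
        = (if j \<in> {1..m} then Poly_Mapping.lookup \<mu> (TV j) else 0)"
  proof -
    have "(\<Sum>k\<in>{1..m}. Poly_Mapping.lookup \<mu> (TV k) * Poly_Mapping.lookup (img m a b (TV k)) (TV j))
        = (\<Sum>k\<in>{1..m}. if k = j then Poly_Mapping.lookup \<mu> (TV k) else 0)"
      by (rule sum.cong) (auto simp: lookup_single_var)
    then show ?thesis by simp
  qed
  have 2: "(\<Sum>i\<in>{1..m}. Poly_Mapping.lookup \<mu> (XV i) * Poly_Mapping.lookup (img m a b (XV i)) (TV j))
        = (\<Sum>i\<in>{1..m}. if i = j then Poly_Mapping.lookup \<mu> (XV i) * a i else 0)"
    by (rule sum.cong) (auto simp: lookup_add lookup_single_var)
  have 3: "(\<Sum>i\<in>{1..m}. if i = j then Poly_Mapping.lookup \<mu> (XV i) * a i else 0)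
        = (if j \<in> {1..m} then Poly_Mapping.lookup \<mu> (XV j) * a j else 0)"
    by simp
  show ?thesis
    unfolding lookup_phi_V[OF assms] 1 2 3
    by (simp add: lookup_add lookup_tmon_TV psi_exp_def lookup_single_var)
qed

lemma lookup_phi_ZV:
  assumes "validmon m \<mu>"
  shows "Poly_Mapping.lookup (phi m a b \<mu>) ZV = degXW m \<mu>"
proof -
  have 2: "(\<Sum>i\<in>{1..m}. Poly_Mapping.lookup \<mu> (XV i) * Poly_Mapping.lookup (img m a b (XV i)) ZV)
        = (\<Sum>i\<in>{1..m}. Poly_Mapping.lookup \<mu> (XV i))"
    by (rule sum.cong) (auto simp: lookup_add lookup_single_var)
  show ?thesis
    unfolding lookup_phi_V[OF assms] 2
    by (simp add: lookup_add lookup_tmon_ZV lookup_single_var degXW_def)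
qed

lemma lookup_phi_XV:
  assumes "validmon m \<mu>"
  shows "Poly_Mapping.lookup (phi m a b \<mu>) (XV l) = 0"
proof -
  have 2: "(\<Sum>i\<in>{1..m}. Poly_Mapping.lookup \<mu> (XV i) * Poly_Mapping.lookup (img m a b (XV i)) (XV l)) = 0"
    by (rule sum.neutral) (auto simp: lookup_add lookup_single_var)
  show ?thesis
    unfolding lookup_phi_V[OF assms] 2
    by (simp add: lookup_add lookup_tmon_XV lookup_single_var)
qed

lemma phi_valid:
  assumes "validmon m \<mu>"
  shows "phi m a b \<mu> = tmon m (\<lambda>k. Poly_Mapping.lookup \<mu> (TV k) + psi_exp m a b \<mu> k)
                       + Poly_Mapping.single ZV (degXW m \<mu>)"
proof (rule poly_mapping_eqI)
  fix x show "Poly_Mapping.lookup (phi m a b \<mu>) x = Poly_Mapping.lookup (tmon m (\<lambda>k. Poly_Mapping.lookup \<mu> (TV k) + psi_exp m a b \<mu> k)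
                       + Poly_Mapping.single ZV (degXW m \<mu>)) x"
    by (cases x) (simp_all add: lookup_phi_TV[OF assms] lookup_phi_XV[OF assms] lookup_phi_ZV[OF assms]
          lookup_add lookup_tmon_TV lookup_tmon_XV lookup_tmon_ZV lookup_single_var)
qed

lemma fiber_TV:
  assumes "validmon m \<mu>" "validmon m \<nu>" "phi m a b \<mu> = phi m a b \<nu>" "k \<in> {1..m}"
  shows "Poly_Mapping.lookup \<mu> (TV k) + psi_exp m a b \<mu> k = Poly_Mapping.lookup \<nu> (TV k) + psi_exp m a b \<nu> k"
proof -
  have "Poly_Mapping.lookup (phi m a b \<mu>) (TV k) = Poly_Mapping.lookup (phi m a b \<nu>) (TV k)"
    using assms(3) by simp
  then show ?thesis unfolding lookup_phi_TV[OF assms(1)] lookup_phi_TV[OF assms(2)] using assms(4) by simp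
qed

lemma fiber_deg:
  assumes "validmon m \<mu>" "validmon m \<nu>" "phi m a b \<mu> = phi m a b \<nu>"
  shows "degXW m \<mu> = degXW m \<nu>"
proof -
  have "Poly_Mapping.lookup (phi m a b \<mu>) ZV = Poly_Mapping.lookup (phi m a b \<nu>) ZV"
    using assms(3) by simp
  then show ?thesis unfolding lookup_phi_ZV[OF assms(1)] lookup_phi_ZV[OF assms(2)] .
qed

section \<open>The binomials P(M,N)\<close>

definition XM :: "nat \<Rightarrow> mon \<Rightarrow> bool" where
  "XM m M = (\<forall>v\<in>Poly_Mapping.keys M. \<exists>i\<in>{1..m+1}. v = XV i)"

definition PA :: "nat \<Rightarrow> (nat \<Rightarrow> nat) \<Rightarrow> (nat \<Rightarrow> nat) \<Rightarrow> mon \<Rightarrow> mon \<Rightarrow> mon" where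
  "PA m a b M N = tmon m (\<lambda>k. psi_exp m a b N k - min (psi_exp m a b M k) (psi_exp m a b N k)) + M"

definition PB :: "nat \<Rightarrow> (nat \<Rightarrow> nat) \<Rightarrow> (nat \<Rightarrow> nat) \<Rightarrow> mon \<Rightarrow> mon \<Rightarrow> mon" where
  "PB m a b M N = tmon m (\<lambda>k. psi_exp m a b M k - min (psi_exp m a b M k) (psi_exp m a b N k)) + N"

lemma Pcal_eq: "Pcal m a b M N = monom (PA m a b M N) - monom (PB m a b M N)"
  by (simp add: Pcal_def PA_def PB_def Let_def)

lemma XM_lookup: "XM m M \<Longrightarrow> (\<And>i. i \<in> {1..m+1} \<Longrightarrow> v \<noteq> XV i) \<Longrightarrow> Poly_Mapping.lookup M v = 0"
proof (rule ccontr)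
  assume "XM m M" "\<And>i. i \<in> {1..m+1} \<Longrightarrow> v \<noteq> XV i" "Poly_Mapping.lookup M v \<noteq> 0"
  then have "v \<in> Poly_Mapping.keys M" by (simp add: in_keys_iff)
  then obtain i where "i \<in> {1..m+1}" "v = XV i" using \<open>XM m M\<close> unfolding XM_def by blast
  then show False using \<open>\<And>i. i \<in> {1..m+1} \<Longrightarrow> v \<noteq> XV i\<close> by blast
qed

lemma XM_TV: "XM m M \<Longrightarrow> Poly_Mapping.lookup M (TV k) = 0"
  by (rule XM_lookup) auto

lemma XM_ZV: "XM m M \<Longrightarrow> Poly_Mapping.lookup M ZV = 0"
  by (rule XM_lookup) auto

lemma XM_XV: "XM m M \<Longrightarrow> l \<notin> {1..m+1} \<Longrightarrow> Poly_Mapping.lookup M (XV l) = 0"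
  by (rule XM_lookup) auto

lemma lookup_tadd_TV: "XM m M \<Longrightarrow> Poly_Mapping.lookup (tmon m e + M) (TV k) = (if k \<in> {1..m} then e k else 0)"
  by (simp add: lookup_add lookup_tmon_TV XM_TV)

lemma lookup_tadd_XV: "Poly_Mapping.lookup (tmon m e + M) (XV l) = Poly_Mapping.lookup M (XV l)"
  by (simp add: lookup_add lookup_tmon_XV)

lemma lookup_tadd_ZV: "XM m M \<Longrightarrow> Poly_Mapping.lookup (tmon m e + M) ZV = 0"
  by (simp add: lookup_add lookup_tmon_ZV XM_ZV)

lemma validmon_tadd:
  assumes "XM m M"
  shows "validmon m (tmon m e + M)"
  unfolding validmon_def
proof
  fix v assume v: "v \<in> Poly_Mapping.keys (tmon m e + M)"
  then have nz: "Poly_Mapping.lookup (tmon m e + M) v \<noteq> 0" by (simp add: in_keys_iff)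
  show "valid_var m v"
  proof (cases v)
    case (TV k)
    have "k \<in> {1..m}"
    proof (rule ccontr)
      assume "k \<notin> {1..m}"
      then have "Poly_Mapping.lookup (tmon m e + M) v = 0" unfolding TV lookup_tadd_TV[OF assms] by (simp only: if_False)
      then show False using nz by simp
    qed
    then show ?thesis using TV by simp
  next
    case (XV i)
    then have "Poly_Mapping.lookup M (XV i) \<noteq> 0" using nz by (simp add: lookup_tadd_XV)
    have "i \<in> {1..m+1}"
    proof (rule ccontr)
      assume "i \<notin> {1..m+1}"
      then have "Poly_Mapping.lookup M (XV i) = 0" by (rule XM_XV[OF assms])
      then show False using \<open>Poly_Mapping.lookup M (XV i) \<noteq> 0\<close> by simp
    qed
    then show ?thesis using XV by simp
  next
    case ZV
    have "Poly_Mapping.lookup (tmon m e + M) v = 0" using ZV lookup_tadd_ZV[OF assms, of e] by simp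
    then show ?thesis using nz by simp
  qed
qed

lemma psi_tadd: "psi_exp m a b (tmon m e + M) = psi_exp m a b M"
  by (rule ext) (simp add: psi_exp_def lookup_tadd_XV)

lemma degXW_tadd: "degXW m (tmon m e + M) = degXW m M"
  by (simp add: degXW_def lookup_tadd_XV)

lemma hX_tadd: "hX m (tmon m e + M) = hX m M"
  by (simp add: hX_def lookup_tadd_XV)

lemma phi_PA_PB:
  assumes "XM m M" "XM m N" "degXW m M = degXW m N"
  shows "phi m a b (PA m a b M N) = phi m a b (PB m a b M N)"
proof -
  have vA: "validmon m (PA m a b M N)" unfolding PA_def by (rule validmon_tadd[OF assms(1)])
  have vB: "validmon m (PB m a b M N)" unfolding PB_def by (rule validmon_tadd[OF assms(2)])
  show ?thesis
    unfolding phi_valid[OF vA] phi_valid[OF vB]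
    unfolding PA_def PB_def psi_tadd degXW_tadd
    apply (simp add: assms(3) lookup_tadd_TV[OF assms(1)] lookup_tadd_TV[OF assms(2)])
    apply (rule tmon_cong)
    apply (auto simp: min_def)
    done
qed

definition good :: "nat \<Rightarrow> (nat \<Rightarrow> nat) \<Rightarrow> (nat \<Rightarrow> nat) \<Rightarrow> 'k::comm_ring_1 mpoly \<Rightarrow> mon \<Rightarrow> mon \<Rightarrow> bool" where
  "good m a b g A B = (g = monom A - monom B \<and> lex_less B A \<and> validmon m A \<and> validmon m B
      \<and> phi m a b A = phi m a b B \<and> hX m B < hX m A \<and> degXW m A = degXW m B
      \<and> 1 \<le> degXW m A \<and> degXW m A \<le> (\<Sum>i\<in>{1..m}. b i))"

lemma Pcal_good:
  assumes "XM m M" "XM m N" "degXW m M = degXW m N" "1 \<le> degXW m M" "degXW m M \<le> (\<Sum>i\<in>{1..m}. b i)"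
    "hX m N < hX m M" "lex_less (PB m a b M N) (PA m a b M N)"
  shows "good m a b (Pcal m a b M N) (PA m a b M N) (PB m a b M N)"
  unfolding good_def
  using assms Pcal_eq phi_PA_PB[OF assms(1-3)] validmon_tadd[OF assms(1)] validmon_tadd[OF assms(2)]
  by (simp add: PA_def PB_def degXW_tadd hX_tadd)

lemma lookup_binom:
  "Poly_Mapping.lookup (monom A - monom B :: 'k::comm_ring_1 mpoly) x = (if x = A then 1 else 0) - (if x = B then 1 else 0)"
  by (simp add: monom_def lookup_minus lookup_single_var eq_commute)

lemma good_keys:
  assumes "good m a b (g::'k::field mpoly) A B"
  shows "Poly_Mapping.keys g = {A, B}"
proof -
  have ne: "A \<noteq> B" using assms lex_less_irrefl unfolding good_def by metis
  have g: "g = monom A - monom B" using assms unfolding good_def by simp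
  show ?thesis
  proof (rule set_eqI)
    fix x show "x \<in> Poly_Mapping.keys g \<longleftrightarrow> x \<in> {A, B}"
      unfolding g in_keys_iff lookup_binom using ne by auto
  qed
qed

lemma good_lead:
  assumes "good m a b (g::'k::field mpoly) A B"
  shows "lead_mon g = A" "g \<noteq> 0"
proof -
  have k: "Poly_Mapping.keys g = {A, B}" by (rule good_keys[OF assms])
  have l: "lex_less B A" using assms unfolding good_def by simp
  show "lead_mon g = A" by (rule lead_mon_eqI) (use k l in auto)
  show "g \<noteq> 0" using k by auto
qed

lemma good_in_L:
  assumes "good m a b (g::'k::field mpoly) A B"
  shows "g \<in> rees_ideal m a b"
proof -
  have k: "Poly_Mapping.keys g = {A, B}" by (rule good_keys[OF assms])
  have v: "validmon m A" "validmon m B" and g: "g = monom A - monom B"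
    and p: "phi m a b A = phi m a b B"
    using assms unfolding good_def by simp_all
  have "g \<in> S_ring m" unfolding S_ring_def using k v unfolding validmon_def by auto
  moreover have "poly_subst (rees_map m a b) g = 0"
    unfolding poly_subst_Psi g Psi_diff monom_def Psi_single p by simp
  ultimately show ?thesis unfolding rees_ideal_def by simp
qed

lemma good_graded:
  assumes "good m a b (g::'k::field mpoly) A B"
  shows "g \<in> graded_part m (rees_ideal m a b) (degXW m A)"
proof -
  have k: "Poly_Mapping.keys g = {A, B}" by (rule good_keys[OF assms])
  have "degXW m A = degXW m B" using assms unfolding good_def by simp
  then show ?thesis unfolding graded_part_def using good_in_L[OF assms] k by auto
qed

section \<open>Goodness of the generators\<close>

lemma lookup_Xmon: "Poly_Mapping.lookup (Xmon i) x = (if x = XV i then 1 else 0)"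
  by (simp add: Xmon_def lookup_single_var eq_commute)

lemma XM_Xmon: "i \<in> {1..m+1} \<Longrightarrow> XM m (Xmon i)"
  unfolding XM_def Xmon_def by simp

lemma degXW_Xmon: "i \<in> {1..m+1} \<Longrightarrow> degXW m (Xmon i) = 1"
proof -
  assume i: "i \<in> {1..m+1}"
  have "degXW m (Xmon i) = (\<Sum>l\<in>{1..m+1}. if l = i then 1 else 0)"
    unfolding degXW_def by (rule sum.cong) (auto simp: lookup_Xmon)
  also have "\<dots> = 1" using i by simp
  finally show ?thesis .
qed

lemma hX_Xmon: "i \<in> {1..m+1} \<Longrightarrow> hX m (Xmon i) = i"
proof -
  assume i: "i \<in> {1..m+1}"
  have "hX m (Xmon i) = (\<Sum>l\<in>{1..m+1}. if l = i then i else 0)"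
    unfolding hX_def by (rule sum.cong) (auto simp: lookup_Xmon)
  also have "\<dots> = i" using i by simp
  finally show ?thesis .
qed

lemma good0:
  assumes "1 \<le> j" "j < i" "i \<le> m + 1" "1 \<le> (\<Sum>k\<in>{1..m}. b k)"
  shows "good m a b (Pcal m a b (Xmon i) (Xmon j) :: 'k::comm_ring_1 mpoly)
           (PA m a b (Xmon i) (Xmon j)) (PB m a b (Xmon i) (Xmon j))"
proof (rule Pcal_good)
  have i: "i \<in> {1..m+1}" and j: "j \<in> {1..m+1}" using assms by auto
  show "XM m (Xmon i)" "XM m (Xmon j)" using i j by (simp_all add: XM_Xmon)
  show "degXW m (Xmon i) = degXW m (Xmon j)" "1 \<le> degXW m (Xmon i)"
    "degXW m (Xmon i) \<le> (\<Sum>k\<in>{1..m}. b k)" using i j assms(4) by (simp_all add: degXW_Xmon)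
  show "hX m (Xmon j) < hX m (Xmon i)" using i j assms(2) by (simp add: hX_Xmon)
  show "lex_less (PB m a b (Xmon i) (Xmon j)) (PA m a b (Xmon i) (Xmon j))"
    unfolding lex_less_def
  proof (intro exI[of _ "XV i"] conjI allI impI)
    show "Poly_Mapping.lookup (PB m a b (Xmon i) (Xmon j)) (XV i) < Poly_Mapping.lookup (PA m a b (Xmon i) (Xmon j)) (XV i)"
      unfolding PA_def PB_def lookup_tadd_XV lookup_Xmon using assms(2) by simp
  next
    fix u assume "var_gt u (XV i)"
    then obtain l where u: "u = XV l" "i < l" by (cases u) auto
    then show "Poly_Mapping.lookup (PB m a b (Xmon i) (Xmon j)) u = Poly_Mapping.lookup (PA m a b (Xmon i) (Xmon j)) u"
      unfolding PA_def PB_def u lookup_tadd_XV lookup_Xmon using assms(2) by simp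
  qed
qed

definition Nc :: "nat \<Rightarrow> (nat \<Rightarrow> nat) \<Rightarrow> mon" where
  "Nc m c = (\<Sum>i\<in>{1..m}. Poly_Mapping.single (XV i) (c i))"

lemma lookup_Nc: "Poly_Mapping.lookup (Nc m c) x = (case x of XV l \<Rightarrow> if l \<in> {1..m} then c l else 0 | _ \<Rightarrow> 0)"
proof (cases x)
  case (XV l)
  have "Poly_Mapping.lookup (Nc m c) x = (\<Sum>i\<in>{1..m}. if i = l then c i else 0)"
    unfolding Nc_def lookup_sum by (rule sum.cong) (auto simp: XV lookup_single_var)
  then show ?thesis using XV by simp
qed (simp_all add: Nc_def lookup_sum lookup_single_var)

lemma XM_Nc: "XM m (Nc m c)"
  unfolding XM_def
proof
  fix v assume "v \<in> Poly_Mapping.keys (Nc m c)"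
  then have nz: "Poly_Mapping.lookup (Nc m c) v \<noteq> 0" by (simp add: in_keys_iff)
  then obtain l where "v = XV l" by (cases v) (simp_all add: lookup_Nc)
  moreover have "l \<in> {1..m}" using nz \<open>v = XV l\<close> by (simp add: lookup_Nc split: if_splits)
  ultimately show "\<exists>i\<in>{1..m + 1}. v = XV i" by auto
qed

lemma degXW_Nc: "degXW m (Nc m c) = (\<Sum>i\<in>{1..m}. c i)"
proof -
  have "degXW m (Nc m c) = (\<Sum>l\<in>{1..m}. Poly_Mapping.lookup (Nc m c) (XV l)) + Poly_Mapping.lookup (Nc m c) (XV (m+1))"
    by (simp add: degXW_def)
  also have "\<dots> = (\<Sum>l\<in>{1..m}. c l)" by (simp add: lookup_Nc)
  finally show ?thesis .
qed

lemma hX_Nc: "hX m (Nc m c) = (\<Sum>i\<in>{1..m}. i * c i)"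
proof -
  have "hX m (Nc m c) = (\<Sum>l\<in>{1..m}. l * Poly_Mapping.lookup (Nc m c) (XV l)) + (m+1) * Poly_Mapping.lookup (Nc m c) (XV (m+1))"
    by (simp add: hX_def)
  also have "\<dots> = (\<Sum>l\<in>{1..m}. l * c l)" by (simp add: lookup_Nc)
  finally show ?thesis .
qed

definition Wt :: "nat \<Rightarrow> nat \<Rightarrow> mon" where
  "Wt m t = Poly_Mapping.single (XV (m+1)) t"

lemma lookup_Wt: "Poly_Mapping.lookup (Wt m t) x = (if x = XV (m+1) then t else 0)"
  by (simp add: Wt_def lookup_single_var eq_commute)

lemma XM_Wt: "XM m (Wt m t)"
  unfolding XM_def Wt_def by (cases "t = 0") simp_all

lemma degXW_Wt: "degXW m (Wt m t) = t"
  by (simp add: degXW_def lookup_Wt)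

lemma hX_Wt: "hX m (Wt m t) = (m+1) * t"
  by (simp add: hX_def lookup_Wt)

lemma good3:
  assumes "1 \<le> (\<Sum>i\<in>{1..m}. c i)" "\<forall>i\<in>{1..m}. c i \<le> b i"
  shows "good m a b (Pcal m a b (Wt m (\<Sum>i\<in>{1..m}. c i)) (Nc m c) :: 'k::comm_ring_1 mpoly)
           (PA m a b (Wt m (\<Sum>i\<in>{1..m}. c i)) (Nc m c)) (PB m a b (Wt m (\<Sum>i\<in>{1..m}. c i)) (Nc m c))"
proof (rule Pcal_good)
  let ?t = "\<Sum>i\<in>{1..m}. c i"
  show "XM m (Wt m ?t)" "XM m (Nc m c)" by (simp_all add: XM_Wt XM_Nc)
  show "degXW m (Wt m ?t) = degXW m (Nc m c)" "1 \<le> degXW m (Wt m ?t)"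
    using assms(1) by (simp_all add: degXW_Wt degXW_Nc)
  show "degXW m (Wt m ?t) \<le> (\<Sum>i\<in>{1..m}. b i)"
    unfolding degXW_Wt by (rule sum_mono) (use assms(2) in auto)
  have "(\<Sum>i\<in>{1..m}. i * c i) \<le> (\<Sum>i\<in>{1..m}. m * c i)"
    by (rule sum_mono) auto
  also have "\<dots> = m * ?t" by (simp add: sum_distrib_left)
  also have "\<dots> < (m+1) * ?t" using assms(1) by simp
  finally show "hX m (Nc m c) < hX m (Wt m ?t)" by (simp add: hX_Nc hX_Wt)
  show "lex_less (PB m a b (Wt m ?t) (Nc m c)) (PA m a b (Wt m ?t) (Nc m c))"
    unfolding lex_less_def
  proof (intro exI[of _ "XV (m+1)"] conjI allI impI)
    show "Poly_Mapping.lookup (PB m a b (Wt m ?t) (Nc m c)) (XV (m+1)) < Poly_Mapping.lookup (PA m a b (Wt m ?t) (Nc m c)) (XV (m+1))"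
      unfolding PA_def PB_def lookup_tadd_XV lookup_Wt lookup_Nc using assms(1) by simp
  next
    fix u assume "var_gt u (XV (m+1))"
    then obtain l where u: "u = XV l" "m + 1 < l" by (cases u) auto
    then show "Poly_Mapping.lookup (PB m a b (Wt m ?t) (Nc m c)) u = Poly_Mapping.lookup (PA m a b (Wt m ?t) (Nc m c)) u"
      unfolding PA_def PB_def u lookup_tadd_XV lookup_Wt lookup_Nc by simp
  qed
qed

lemma all_good:
  assumes "g \<in> Gamma0 m a b \<union> Gamma3 m a b" "1 \<le> (\<Sum>k\<in>{1..m}. b k)"
  shows "\<exists>A B. good m a b (g::'k::comm_ring_1 mpoly) A B"
  using assms(1)
proof
  assume "g \<in> Gamma0 m a b"
  then obtain i j where "g = Pcal m a b (Xmon i) (Xmon j)" "1 \<le> j" "j < i" "i \<le> m + 1"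
    unfolding Gamma0_def by blast
  then show ?thesis using good0[of j i m b a] assms(2) by blast
next
  assume "g \<in> Gamma3 m a b"
  then obtain c where g: "g = Pcal m a b (Poly_Mapping.single (XV (m+1)) (\<Sum>i\<in>{1..m}. c i))
                               (\<Sum>i\<in>{1..m}. Poly_Mapping.single (XV i) (c i))"
     and c: "\<exists>i\<in>{1..m}. c i \<noteq> 0" "\<forall>i\<in>{1..m}. c i \<le> b i"
    unfolding Gamma3_def by blast
  obtain i0 where i0: "i0 \<in> {1..m}" "c i0 \<noteq> 0" using c(1) by blast
  have "c i0 \<le> (\<Sum>i\<in>{1..m}. c i)" by (rule member_le_sum) (use i0 in auto)
  then have t: "1 \<le> (\<Sum>i\<in>{1..m}. c i)" using i0(2) by simp
  have "g = Pcal m a b (Wt m (\<Sum>i\<in>{1..m}. c i)) (Nc m c)" unfolding g Wt_def Nc_def ..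
  then show ?thesis using good3[OF t c(2), of a] by blast
qed

lemma choose_c:
  assumes "finite I" "t \<le> sum f I"
  shows "\<exists>c. (\<forall>k. c k \<le> f k) \<and> (\<forall>k. k \<notin> I \<longrightarrow> c k = 0) \<and> sum c I = (t::nat)"
  using assms
proof (induction I arbitrary: t rule: finite_induct)
  case empty then show ?case by (intro exI[of _ "\<lambda>_. 0"]) simp
next
  case (insert i I)
  define t1 where "t1 = min (f i) t"
  have "t \<le> f i + sum f I" using insert.prems insert.hyps by simp
  then have "t - t1 \<le> sum f I" by (simp add: t1_def min_def) arith
  then obtain c where c: "\<forall>k. c k \<le> f k" "\<forall>k. k \<notin> I \<longrightarrow> c k = 0" "sum c I = t - t1"
    using insert.IH by blast
  define c' where "c' = c(i := t1)"
  have "sum c' I = sum c I" unfolding c'_def by (rule sum.cong) (use insert.hyps in auto)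
  then have "sum c' (insert i I) = t" using insert.hyps c(3) by (simp add: c'_def t1_def min_def)
  moreover have "\<forall>k. c' k \<le> f k" using c(1) by (simp add: c'_def t1_def)
  moreover have "\<forall>k. k \<notin> insert i I \<longrightarrow> c' k = 0" using c(2) by (simp add: c'_def)
  ultimately show ?case by blast
qed

lemma descent:
  fixes al a b :: "nat \<Rightarrow> nat"
  assumes B: "\<forall>k\<in>{1..m}. (\<Sum>j\<in>{1..m}. b j) \<le> a k" "\<forall>k\<in>{1..m}. 0 < a k" "1 \<le> (\<Sum>j\<in>{1..m}. b j)"
  shows "1 \<le> t \<Longrightarrow> t \<le> (\<Sum>k\<in>{1..m}. (al k + t * b k) div a k) \<Longrightarrow>
    \<exists>t'. 1 \<le> t' \<and> t' \<le> t \<and> t' \<le> (\<Sum>j\<in>{1..m}. b j) \<and> t' \<le> (\<Sum>k\<in>{1..m}. (al k + t' * b k) div a k)"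
proof (induction t rule: less_induct)
  case (less t)
  let ?B = "\<Sum>j\<in>{1..m}. b j"
  show ?case
  proof (cases "t \<le> ?B")
    case True then show ?thesis using less.prems by blast
  next
    case False
    define t' where "t' = t - ?B"
    have tt: "t = t' + ?B" "1 \<le> t'" "t' < t" using False B(3) by (auto simp: t'_def)
    have k: "(al k + t * b k) div a k \<le> (al k + t' * b k) div a k + b k" if k: "k \<in> {1..m}" for k
    proof -
      have "?B * b k \<le> a k * b k" using B(1) k by simp
      then have "al k + t * b k \<le> al k + t' * b k + a k * b k" unfolding tt(1) by (simp add: algebra_simps)
      then have "(al k + t * b k) div a k \<le> (al k + t' * b k + a k * b k) div a k" by (rule div_le_mono)
      also have "\<dots> = (al k + t' * b k) div a k + b k" using B(2) k by simp
      finally show ?thesis .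
    qed
    have "(\<Sum>k\<in>{1..m}. (al k + t * b k) div a k) \<le> (\<Sum>k\<in>{1..m}. (al k + t' * b k) div a k + b k)"
      by (rule sum_mono) (rule k)
    also have "\<dots> = (\<Sum>k\<in>{1..m}. (al k + t' * b k) div a k) + ?B" by (simp add: sum.distrib)
    finally have "t' \<le> (\<Sum>k\<in>{1..m}. (al k + t' * b k) div a k)" using less.prems(2) tt(1) by linarith
    then obtain t'' where "1 \<le> t''" "t'' \<le> t'" "t'' \<le> ?B" "t'' \<le> (\<Sum>k\<in>{1..m}. (al k + t'' * b k) div a k)"
      using less.IH[OF tt(3) tt(2)] by blast
    then show ?thesis using tt(3) by (intro exI[of _ t'']) simp
  qed
qed

lemma cap:
  fixes x a b t :: nat
  assumes "x < a" "t \<le> a"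
  shows "(x + t * b) div a \<le> b"
proof -
  have "t * b \<le> a * b" using assms(2) by simp
  moreover have "(b + 1) * a = a * b + a" by (simp add: algebra_simps)
  ultimately have "x + t * b < (b + 1) * a" using assms(1) by linarith
  then have "(x + t * b) div a < b + 1" by (rule less_mult_imp_div_less)
  then show ?thesis by simp
qed

lemma fiber_bound:
  fixes x a de be ga :: nat
  assumes "0 < a" "x + be * a = ga + de * a"
  shows "de \<le> x div a + be"
proof -
  have "de = (de * a) div a" using assms(1) by simp
  also have "\<dots> \<le> (ga + de * a) div a" by (rule div_le_mono) simp
  also have "\<dots> = (x + be * a) div a" using assms(2) by simp
  also have "\<dots> = x div a + be" using assms(1) by simp
  finally show ?thesis .
qed

lemma mon_dvd_PA:
  assumes "XM m M"
    "\<forall>k\<in>{1..m}. psi_exp m a b N k - min (psi_exp m a b M k) (psi_exp m a b N k) \<le> Poly_Mapping.lookup \<mu> (TV k)"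
    "\<forall>l. Poly_Mapping.lookup M (XV l) \<le> Poly_Mapping.lookup \<mu> (XV l)"
  shows "mon_dvd (PA m a b M N) \<mu>"
  unfolding mon_dvd_def
proof
  fix v show "Poly_Mapping.lookup (PA m a b M N) v \<le> Poly_Mapping.lookup \<mu> v"
    unfolding PA_def
    by (cases v) (use assms in \<open>simp_all add: lookup_tadd_TV lookup_tadd_XV lookup_tadd_ZV\<close>)
qed

lemma psi_Xmon: "k \<le> m \<Longrightarrow> psi_exp m a b (Xmon j) k = (if k = j then a k else 0) + (if j = m + 1 then b k else 0)"
  by (simp add: psi_exp_def lookup_Xmon)

lemma psi_Wt: "k \<le> m \<Longrightarrow> psi_exp m a b (Wt m t) k = t * b k"
  by (simp add: psi_exp_def lookup_Wt)

lemma psi_Nc: "k \<in> {1..m} \<Longrightarrow> psi_exp m a b (Nc m c) k = c k * a k"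
  by (simp add: psi_exp_def lookup_Nc)

lemma combo:
  fixes \<mu> \<nu> :: mon
  assumes ab: "\<forall>i\<in>{1..m}. b i < a i" and ba: "\<forall>i\<in>{1..m}. (\<Sum>j\<in>{1..m}. b j) \<le> a i"
    and B1: "1 \<le> (\<Sum>j\<in>{1..m}. b j)"
    and vm: "validmon m \<mu>" and vn: "validmon m \<nu>" and fib: "phi m a b \<mu> = phi m a b \<nu>"
    and lt: "lex_less \<nu> \<mu>"
  shows "\<exists>g A B. g \<in> Gamma0 m a b \<union> Gamma3 m a b \<and> good m a b (g::'k::comm_ring_1 mpoly) A B \<and> mon_dvd A \<mu>"
proof -
  define al where "al = (\<lambda>k. Poly_Mapping.lookup \<mu> (TV k))"
  define ga where "ga = (\<lambda>k. Poly_Mapping.lookup \<nu> (TV k))"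
  define be where "be = (\<lambda>k. Poly_Mapping.lookup \<mu> (XV k))"
  define de where "de = (\<lambda>k. Poly_Mapping.lookup \<nu> (XV k))"
  define w where "w = Poly_Mapping.lookup \<mu> (XV (m+1))"
  define v where "v = Poly_Mapping.lookup \<nu> (XV (m+1))"
  have eqk: "al k + be k * a k + w * b k = ga k + de k * a k + v * b k" if "k \<in> {1..m}" for k
    using fiber_TV[OF vm vn fib that]
    by (simp add: psi_exp_def al_def ga_def be_def de_def w_def v_def add.assoc)
  have deg: "sum be {1..m} + w = sum de {1..m} + v"
    using fiber_deg[OF vm vn fib] by (simp add: degXW_def be_def de_def w_def v_def)
  have apos: "0 < a k" if "k \<in> {1..m}" for k
  proof -
    have "b k < a k" using ab that by blast
    then show ?thesis by simp
  qed
  obtain x where x: "Poly_Mapping.lookup \<nu> x < Poly_Mapping.lookup \<mu> x"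
      "\<forall>u. var_gt u x \<longrightarrow> Poly_Mapping.lookup \<nu> u = Poly_Mapping.lookup \<mu> u"
    using lt unfolding lex_less_def by blast
  have zero_out: "Poly_Mapping.lookup \<mu> (XV l) = 0 \<and> Poly_Mapping.lookup \<nu> (XV l) = 0" if "l \<notin> {1..m+1}" for l
    using validmon_lookup[OF vm, of "XV l"] validmon_lookup[OF vn, of "XV l"] that by simp
  have zero_T: "Poly_Mapping.lookup \<mu> (TV k) = 0 \<and> Poly_Mapping.lookup \<nu> (TV k) = 0" if "k \<notin> {1..m}" for k
    using validmon_lookup[OF vm, of "TV k"] validmon_lookup[OF vn, of "TV k"] that by simp
  have zero_Z: "Poly_Mapping.lookup \<mu> ZV = 0 \<and> Poly_Mapping.lookup \<nu> ZV = 0"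
    using validmon_lookup[OF vm, of "ZV"] validmon_lookup[OF vn, of "ZV"] by simp
  have wv: "v \<le> w"
  proof (rule ccontr)
    assume "\<not> v \<le> w"
    then have wlv: "w < v" by simp
    consider "x = XV (m+1)" | "var_gt (XV (m+1)) x" | "var_gt x (XV (m+1))" using var_gt_total by blast
    then show False
    proof cases
      case 1 then show False using x(1) wlv by (simp add: w_def v_def)
    next
      case 2 then have "v = w" using x(2) by (simp add: w_def v_def)
      then show False using wlv by simp
    next
      case 3 then obtain l where l: "x = XV l" "m+1 < l" by (cases x) auto
      then show False using x(1) zero_out[of l] by simp
    qed
  qed
  show ?thesis
  proof (cases "w = v")
    case True
    have "\<exists>i\<in>{1..m}. x = XV i"
    proof (cases x)
      case (TV k)
      have bd: "be l = de l" for l using x(2) TV by (simp add: be_def de_def)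
      show ?thesis
      proof (cases "k \<in> {1..m}")
        case True
        then have "al k = ga k" using eqk[OF True] bd \<open>w = v\<close> by simp
        then show ?thesis using x(1) TV by (simp add: al_def ga_def)
      next
        case False then show ?thesis using x(1) TV zero_T[of k] by simp
      qed
    next
      case (XV l)
      show ?thesis
      proof (cases "l \<in> {1..m}")
        case True then show ?thesis using XV by blast
      next
        case False
        show ?thesis
        proof (cases "l = m + 1")
          case True then show ?thesis using x(1) XV \<open>w = v\<close> by (simp add: w_def v_def)
        next
          case False
          then have "l \<notin> {1..m+1}" using \<open>l \<notin> {1..m}\<close> by auto
          then show ?thesis using x(1) XV zero_out[of l] by simp
        qed
      qed
    next
      case ZV then show ?thesis using x(1) zero_Z by simp
    qed
    then obtain i where i: "i \<in> {1..m}" "x = XV i" by blast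
    have dbi: "de i < be i" using x(1) i by (simp add: be_def de_def)
    have above: "de l = be l" if "i < l" for l using x(2) i that by (simp add: be_def de_def)
    have "\<exists>j\<in>{1..m}. j < i \<and> be j < de j"
    proof (rule ccontr)
      assume "\<not> (\<exists>j\<in>{1..m}. j < i \<and> be j < de j)"
      then have h: "\<forall>j\<in>{1..m}. j < i \<longrightarrow> de j \<le> be j" by auto
      have "sum de {1..m} < sum be {1..m}"
      proof (rule sum_strict_mono_ex1)
        show "finite {1..m}" by simp
        show "\<forall>j\<in>{1..m}. de j \<le> be j"
        proof
          fix j assume j: "j \<in> {1..m}"
          consider "j < i" | "j = i" | "i < j" by linarith
          then show "de j \<le> be j"
          proof cases
            case 1 then show ?thesis using h j by blast
          next
            case 2 then show ?thesis using dbi by simp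
          next
            case 3 then show ?thesis using above by simp
          qed
        qed
        show "\<exists>j\<in>{1..m}. de j < be j" using i dbi by blast
      qed
      then show False using deg True by simp
    qed
    then obtain j where j: "j \<in> {1..m}" "j < i" "be j < de j" by blast
    have ajl: "a j \<le> al j"
    proof -
      have e: "al j + be j * a j = ga j + de j * a j" using eqk[OF j(1)] True by simp
      have "(be j + 1) * a j \<le> de j * a j" using j(3) by (intro mult_le_mono1) simp
      then show ?thesis using e by (simp add: algebra_simps)
    qed
    let ?g = "Pcal m a b (Xmon i) (Xmon j) :: 'k mpoly"
    have "?g \<in> Gamma0 m a b" unfolding Gamma0_def mem_Collect_eq using i j by (intro exI[of _ i] exI[of _ j]) auto
    moreover have "good m a b ?g (PA m a b (Xmon i) (Xmon j)) (PB m a b (Xmon i) (Xmon j))"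
      by (rule good0) (use i j B1 in auto)
    moreover have "mon_dvd (PA m a b (Xmon i) (Xmon j)) \<mu>"
    proof (rule mon_dvd_PA)
      show "XM m (Xmon i)" using i by (intro XM_Xmon) auto
      show "\<forall>k\<in>{1..m}. psi_exp m a b (Xmon j) k - min (psi_exp m a b (Xmon i) k) (psi_exp m a b (Xmon j) k)
              \<le> Poly_Mapping.lookup \<mu> (TV k)"
      proof
        fix k assume k: "k \<in> {1..m}"
        have pj: "psi_exp m a b (Xmon j) k = (if k = j then a k else 0)" using k j by (simp add: psi_Xmon)
        have le: "psi_exp m a b (Xmon j) k - min (psi_exp m a b (Xmon i) k) (psi_exp m a b (Xmon j) k)
              \<le> psi_exp m a b (Xmon j) k" by simp
        show "psi_exp m a b (Xmon j) k - min (psi_exp m a b (Xmon i) k) (psi_exp m a b (Xmon j) k)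
              \<le> Poly_Mapping.lookup \<mu> (TV k)"
        proof (cases "k = j")
          case True
          then have "psi_exp m a b (Xmon j) k \<le> Poly_Mapping.lookup \<mu> (TV k)" using pj ajl by (simp add: al_def)
          then show ?thesis using le by linarith
        next
          case False
          then have "psi_exp m a b (Xmon j) k = 0" using pj by simp
          then show ?thesis using le by linarith
        qed
      qed
      show "\<forall>l. Poly_Mapping.lookup (Xmon i) (XV l) \<le> Poly_Mapping.lookup \<mu> (XV l)"
        using dbi by (simp add: lookup_Xmon be_def)
    qed
    ultimately show ?thesis by blast
  next
    case False
    then have vw: "v < w" using wv by simp
    show ?thesis
    proof (cases "\<exists>k\<in>{1..m}. a k - b k \<le> al k")
      case True
      then obtain k where k: "k \<in> {1..m}" "a k - b k \<le> al k" by blast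
      let ?g = "Pcal m a b (Xmon (m+1)) (Xmon k) :: 'k mpoly"
      have "?g \<in> Gamma0 m a b" unfolding Gamma0_def mem_Collect_eq using k by (intro exI[of _ "m+1"] exI[of _ k]) auto
      moreover have "good m a b ?g (PA m a b (Xmon (m+1)) (Xmon k)) (PB m a b (Xmon (m+1)) (Xmon k))"
        by (rule good0) (use k B1 in auto)
      moreover have "mon_dvd (PA m a b (Xmon (m+1)) (Xmon k)) \<mu>"
      proof (rule mon_dvd_PA)
        show "XM m (Xmon (m+1))" by (intro XM_Xmon) auto
        show "\<forall>l\<in>{1..m}. psi_exp m a b (Xmon k) l - min (psi_exp m a b (Xmon (m+1)) l) (psi_exp m a b (Xmon k) l)
                \<le> Poly_Mapping.lookup \<mu> (TV l)"
        proof
          fix l assume l: "l \<in> {1..m}"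
          have 1: "psi_exp m a b (Xmon k) l = (if l = k then a l else 0)" using k l by (simp add: psi_Xmon)
          have 2: "psi_exp m a b (Xmon (m+1)) l = b l" using l by (simp add: psi_Xmon)
          show "psi_exp m a b (Xmon k) l - min (psi_exp m a b (Xmon (m+1)) l) (psi_exp m a b (Xmon k) l)
                \<le> Poly_Mapping.lookup \<mu> (TV l)"
            unfolding 1 2 using k by (simp add: al_def min_def)
        qed
        show "\<forall>l. Poly_Mapping.lookup (Xmon (m+1)) (XV l) \<le> Poly_Mapping.lookup \<mu> (XV l)"
          using vw by (simp add: lookup_Xmon w_def)
      qed
      ultimately show ?thesis by blast
    next
      case False
      then have small: "\<forall>k\<in>{1..m}. al k < a k - b k" by auto
      define d where "d = w - v"
      have d1: "1 \<le> d" using vw by (simp add: d_def)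
      have per: "de k \<le> (al k + d * b k) div a k + be k" if k: "k \<in> {1..m}" for k
      proof (rule fiber_bound[OF apos[OF k]])
        have "w * b k = v * b k + d * b k" using vw by (simp add: d_def algebra_simps)
        then show "al k + d * b k + be k * a k = ga k + de k * a k" using eqk[OF k] by simp
      qed
      have "sum de {1..m} \<le> (\<Sum>k\<in>{1..m}. (al k + d * b k) div a k + be k)"
        by (rule sum_mono) (rule per)
      also have "\<dots> = (\<Sum>k\<in>{1..m}. (al k + d * b k) div a k) + sum be {1..m}" by (simp add: sum.distrib)
      finally have Fd: "d \<le> (\<Sum>k\<in>{1..m}. (al k + d * b k) div a k)" using deg vw by (simp add: d_def)
      have a0: "\<forall>k\<in>{1..m}. 0 < a k" using apos by blast
      obtain t where t: "1 \<le> t" "t \<le> d" "t \<le> (\<Sum>j\<in>{1..m}. b j)" "t \<le> (\<Sum>k\<in>{1..m}. (al k + t * b k) div a k)"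
        using descent[OF ba a0 B1 d1 Fd] by blast
      have capk: "(al k + t * b k) div a k \<le> b k" if k: "k \<in> {1..m}" for k
      proof (rule cap)
        show "al k < a k" using small k by fastforce
        show "t \<le> a k" using t(3) ba k by fastforce
      qed
      define q where "q = (\<lambda>k. if k \<in> {1..m} then (al k + t * b k) div a k else 0)"
      have "sum q {1..m} = (\<Sum>k\<in>{1..m}. (al k + t * b k) div a k)" unfolding q_def by simp
      then obtain c where c: "\<forall>k. c k \<le> q k" "\<forall>k. k \<notin> {1..m} \<longrightarrow> c k = 0" "sum c {1..m} = t"
        using choose_c[of "{1..m}" t q] t(4) by auto
      have ck: "c k \<le> (al k + t * b k) div a k" if k: "k \<in> {1..m}" for k
        using c(1)[rule_format, of k] k by (simp add: q_def)
      have cb: "\<forall>i\<in>{1..m}. c i \<le> b i"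
      proof
        fix i assume i: "i \<in> {1..m}"
        show "c i \<le> b i" using ck[OF i] capk[OF i] by linarith
      qed
      have cne: "\<exists>i\<in>{1..m}. c i \<noteq> 0"
      proof (rule ccontr)
        assume "\<not> (\<exists>i\<in>{1..m}. c i \<noteq> 0)"
        then have "sum c {1..m} = 0" by simp
        then show False using c(3) t(1) by simp
      qed
      let ?g = "Pcal m a b (Wt m (\<Sum>i\<in>{1..m}. c i)) (Nc m c) :: 'k mpoly"
      have "?g \<in> Gamma3 m a b" unfolding Gamma3_def mem_Collect_eq
      proof (rule exI[of _ c], intro conjI)
        show "?g = Pcal m a b (Poly_Mapping.single (XV (m + 1)) (\<Sum>i\<in>{1..m}. c i)) (\<Sum>i\<in>{1..m}. Poly_Mapping.single (XV i) (c i))"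
          by (simp only: Wt_def Nc_def)
        show "\<exists>i\<in>{1..m}. c i \<noteq> 0" by (rule cne)
        show "\<forall>i\<in>{1..m}. c i \<le> b i" by (rule cb)
      qed
      moreover have "good m a b ?g (PA m a b (Wt m (\<Sum>i\<in>{1..m}. c i)) (Nc m c)) (PB m a b (Wt m (\<Sum>i\<in>{1..m}. c i)) (Nc m c))"
      proof -
        have "1 \<le> (\<Sum>i\<in>{1..m}. c i)" using c(3) t(1) by simp
        then show ?thesis by (rule good3[OF _ cb])
      qed
      moreover have "mon_dvd (PA m a b (Wt m (\<Sum>i\<in>{1..m}. c i)) (Nc m c)) \<mu>"
      proof (rule mon_dvd_PA)
        show "XM m (Wt m (\<Sum>i\<in>{1..m}. c i))" by (rule XM_Wt)
        show "\<forall>k\<in>{1..m}. psi_exp m a b (Nc m c) k - min (psi_exp m a b (Wt m (\<Sum>i\<in>{1..m}. c i)) k) (psi_exp m a b (Nc m c) k)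
                \<le> Poly_Mapping.lookup \<mu> (TV k)"
        proof
          fix k assume k: "k \<in> {1..m}"
          have 1: "psi_exp m a b (Nc m c) k = c k * a k" using k by (simp add: psi_Nc)
          have 2: "psi_exp m a b (Wt m (\<Sum>i\<in>{1..m}. c i)) k = t * b k" using k c(3) by (simp add: psi_Wt)
          have "c k * a k \<le> ((al k + t * b k) div a k) * a k"
            using ck[OF k] by (rule mult_le_mono1)
          also have "\<dots> \<le> al k + t * b k" by (rule div_times_less_eq_dividend)
          finally have "c k * a k \<le> al k + t * b k" .
          then show "psi_exp m a b (Nc m c) k - min (psi_exp m a b (Wt m (\<Sum>i\<in>{1..m}. c i)) k) (psi_exp m a b (Nc m c) k)
                \<le> Poly_Mapping.lookup \<mu> (TV k)"
            unfolding 1 2 al_def by (simp add: min_def) linarith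
        qed
        show "\<forall>l. Poly_Mapping.lookup (Wt m (\<Sum>i\<in>{1..m}. c i)) (XV l) \<le> Poly_Mapping.lookup \<mu> (XV l)"
          using c(3) t(2) by (simp add: lookup_Wt w_def d_def)
      qed
      ultimately show ?thesis by blast
    qed
  qed
qed

lemma gi_zero: "0 \<in> gen_ideal S A"
  unfolding gen_ideal_def by (rule CollectI, rule exI[of _ 0]) simp

lemma gi_gen: "r \<in> S \<Longrightarrow> g \<in> A \<Longrightarrow> r * g \<in> gen_ideal S A"
  unfolding gen_ideal_def
  by (rule CollectI, rule exI[of _ 1], rule exI[of _ "\<lambda>_. r"], rule exI[of _ "\<lambda>_. g"]) simp

lemma sum_shift_lessThan:
  "(\<Sum>k<n + n'. h k) = (\<Sum>k<n. h k) + (\<Sum>k<n'. h (k + (n::nat)))"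
  by (induction n') (simp_all add: ac_simps)

lemma gi_add:
  assumes "f \<in> gen_ideal S A" "f' \<in> gen_ideal S A"
  shows "f + f' \<in> gen_ideal S A"
proof -
  obtain n :: nat and r g where 1: "\<forall>k<n. r k \<in> S \<and> g k \<in> A" "f = (\<Sum>k<n. r k * g k)"
    using assms(1) unfolding gen_ideal_def by blast
  obtain n' :: nat and r' g' where 2: "\<forall>k<n'. r' k \<in> S \<and> g' k \<in> A" "f' = (\<Sum>k<n'. r' k * g' k)"
    using assms(2) unfolding gen_ideal_def by blast
  define R where "R k = (if k < n then r k else r' (k - n))" for k
  define G where "G k = (if k < n then g k else g' (k - n))" for k
  have "(\<Sum>k<n + n'. R k * G k) = (\<Sum>k<n. R k * G k) + (\<Sum>k<n'. R (k + n) * G (k + n))"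
    by (rule sum_shift_lessThan)
  also have "(\<Sum>k<n. R k * G k) = f" unfolding 1(2) R_def G_def by (rule sum.cong) auto
  also have "(\<Sum>k<n'. R (k + n) * G (k + n)) = f'" unfolding 2(2) R_def G_def by (rule sum.cong) auto
  finally have eq: "f + f' = (\<Sum>k<n + n'. R k * G k)" by simp
  have "\<forall>k<n + n'. R k \<in> S \<and> G k \<in> A"
  proof (intro allI impI)
    fix k assume "k < n + n'"
    then show "R k \<in> S \<and> G k \<in> A" using 1(1) 2(1) unfolding R_def G_def
      by (cases "k < n") auto
  qed
  then show ?thesis unfolding gen_ideal_def using eq by blast
qed

lemma gi_sum:
  assumes "finite I" "\<forall>i\<in>I. h i \<in> gen_ideal S A"
  shows "sum h I \<in> gen_ideal S A"
  using assms by (induction I rule: finite_induct) (simp_all add: gi_zero gi_add)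

lemma gi_mono: "A \<subseteq> A' \<Longrightarrow> gen_ideal S A \<subseteq> gen_ideal S A'"
  unfolding gen_ideal_def by blast

lemma S_ring_validmon: "f \<in> S_ring m \<longleftrightarrow> (\<forall>\<mu>\<in>Poly_Mapping.keys f. validmon m \<mu>)"
  unfolding S_ring_def validmon_def by simp

lemma validmon_add: "validmon m \<mu> \<Longrightarrow> validmon m \<nu> \<Longrightarrow> validmon m (\<mu> + \<nu>)"
  unfolding validmon_def using keys_add[of \<mu> \<nu>] by blast

lemma S_add: "p \<in> S_ring m \<Longrightarrow> q \<in> S_ring m \<Longrightarrow> p + q \<in> S_ring m"
  unfolding S_ring_validmon using keys_add[of p q] by blast

lemma S_mult: "p \<in> S_ring m \<Longrightarrow> q \<in> S_ring m \<Longrightarrow> p * q \<in> S_ring m"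
  unfolding S_ring_validmon
proof
  fix \<mu> assume p: "\<forall>\<mu>\<in>Poly_Mapping.keys p. validmon m \<mu>" and q: "\<forall>\<mu>\<in>Poly_Mapping.keys q. validmon m \<mu>"
    and "\<mu> \<in> Poly_Mapping.keys (p * q)"
  then obtain x y where "\<mu> = x + y" "x \<in> Poly_Mapping.keys p" "y \<in> Poly_Mapping.keys q"
    using keys_mult[of p q] by blast
  then show "validmon m \<mu>" using p q validmon_add by blast
qed

lemma L_zero: "0 \<in> rees_ideal m a b"
  unfolding rees_ideal_def S_ring_def by (simp add: poly_subst_Psi)

lemma L_add: "p \<in> rees_ideal m a b \<Longrightarrow> q \<in> rees_ideal m a b \<Longrightarrow> p + q \<in> rees_ideal m a b"
  unfolding rees_ideal_def by (simp add: S_add poly_subst_Psi Psi_add)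

lemma L_mult: "r \<in> S_ring m \<Longrightarrow> g \<in> rees_ideal m a b \<Longrightarrow> r * g \<in> rees_ideal m a b"
  unfolding rees_ideal_def by (simp add: S_mult poly_subst_Psi Psi_mult)

lemma gi_L:
  assumes "A \<subseteq> rees_ideal m a b"
  shows "gen_ideal (S_ring m) A \<subseteq> rees_ideal m a b"
proof
  fix f assume "f \<in> gen_ideal (S_ring m) A"
  then obtain n :: nat and r g where h: "\<forall>k<n. r k \<in> S_ring m \<and> g k \<in> A" "f = (\<Sum>k<n. r k * g k)"
    unfolding gen_ideal_def by blast
  have "(\<Sum>k<n. r k * g k) \<in> rees_ideal m a b" for n'
    using h(1)
  proof (induction n)
    case 0 then show ?case by (simp add: L_zero)
  next
    case (Suc n)
    then show ?case using assms by (simp add: L_add L_mult subset_iff)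
  qed
  then show "f \<in> rees_ideal m a b" using h(2) by simp
qed

lemma hX_add: "hX m (\<mu> + \<nu>) = hX m \<mu> + hX m \<nu>"
  by (simp add: hX_def lookup_add algebra_simps sum.distrib)

lemma mon_dvd_split:
  assumes "mon_dvd A \<mu>"
  shows "\<mu> = (\<mu> - A) + A"
proof (rule poly_mapping_eqI)
  fix x show "Poly_Mapping.lookup \<mu> x = Poly_Mapping.lookup (\<mu> - A + A) x"
    using assms unfolding mon_dvd_def by (simp add: lookup_add lookup_minus)
qed

lemma validmon_diff: "validmon m \<mu> \<Longrightarrow> validmon m (\<mu> - A)"
  unfolding validmon_def
proof
  fix v assume h: "\<forall>v\<in>Poly_Mapping.keys \<mu>. valid_var m v" "v \<in> Poly_Mapping.keys (\<mu> - A)"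
  then have "Poly_Mapping.lookup \<mu> v \<noteq> 0" by (simp add: in_keys_iff lookup_minus)
  then have "v \<in> Poly_Mapping.keys \<mu>" by (simp add: in_keys_iff)
  then show "valid_var m v" using h(1) by blast
qed

section \<open>Binomials lie in the ideal generated by G\<close>

lemma binom_step:
  assumes ab: "\<forall>i\<in>{1..m}. b i < a i" and ba: "\<forall>i\<in>{1..m}. (\<Sum>j\<in>{1..m}. b j) \<le> a i"
    and B1: "1 \<le> (\<Sum>j\<in>{1..m}. b j)"
    and vm: "validmon m \<mu>" and vn: "validmon m \<nu>" and fib: "phi m a b \<mu> = phi m a b \<nu>"
    and lt: "lex_less \<nu> \<mu>"
  obtains \<mu>' g where "validmon m \<mu>'" "phi m a b \<mu>' = phi m a b \<nu>" "hX m \<mu>' < hX m \<mu>"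
    "Poly_Mapping.single \<mu> c - Poly_Mapping.single \<nu> c
       = g + (Poly_Mapping.single \<mu>' c - Poly_Mapping.single \<nu> (c::'k::field))"
    "g \<in> gen_ideal (S_ring m) (Gamma0 m a b \<union> Gamma3 m a b)"
proof -
  obtain g0 A B where g0: "g0 \<in> Gamma0 m a b \<union> Gamma3 m a b" "good m a b (g0::'k mpoly) A B" "mon_dvd A \<mu>"
    using combo[OF ab ba B1 vm vn fib lt] by blast
  have gd: "g0 = monom A - monom B" "validmon m B" "phi m a b A = phi m a b B" "hX m B < hX m A"
    using g0(2) unfolding good_def by simp_all
  define Q where "Q = \<mu> - A"
  have mu: "\<mu> = Q + A" unfolding Q_def by (rule mon_dvd_split[OF g0(3)])
  have vQ: "validmon m Q" unfolding Q_def by (rule validmon_diff[OF vm])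
  define \<mu>' where "\<mu>' = Q + B"
  have v': "validmon m \<mu>'" unfolding \<mu>'_def by (rule validmon_add[OF vQ gd(2)])
  have p': "phi m a b \<mu>' = phi m a b \<nu>"
    unfolding \<mu>'_def using fib mu gd(3) by (metis phi_add)
  have h': "hX m \<mu>' < hX m \<mu>"
    using gd(4) mu unfolding \<mu>'_def by (metis hX_add add_less_cancel_left)
  have SQ: "Poly_Mapping.single Q c \<in> S_ring m"
    unfolding S_ring_validmon using vQ by simp
  have eq: "Poly_Mapping.single Q c * g0 = Poly_Mapping.single \<mu> c - Poly_Mapping.single \<mu>' c"
    unfolding gd(1) monom_def \<mu>'_def by (subst mu) (simp add: right_diff_distrib mult_single)
  have "Poly_Mapping.single Q c * g0 \<in> gen_ideal (S_ring m) (Gamma0 m a b \<union> Gamma3 m a b)"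
    by (rule gi_gen[OF SQ g0(1)])
  moreover have "Poly_Mapping.single \<mu> c - Poly_Mapping.single \<nu> c
       = Poly_Mapping.single Q c * g0 + (Poly_Mapping.single \<mu>' c - Poly_Mapping.single \<nu> c)"
    unfolding eq by simp
  ultimately show ?thesis using that v' p' h' by blast
qed

lemma binom_in:
  assumes ab: "\<forall>i\<in>{1..m}. b i < a i" and ba: "\<forall>i\<in>{1..m}. (\<Sum>j\<in>{1..m}. b j) \<le> a i"
    and B1: "1 \<le> (\<Sum>j\<in>{1..m}. b j)"
  shows "validmon m \<mu> \<Longrightarrow> validmon m \<nu> \<Longrightarrow> phi m a b \<mu> = phi m a b \<nu> \<Longrightarrow>
    Poly_Mapping.single \<mu> c - Poly_Mapping.single \<nu> (c::'k::field)
      \<in> gen_ideal (S_ring m) (Gamma0 m a b \<union> Gamma3 m a b)"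
proof -
  let ?I = "gen_ideal (S_ring m) (Gamma0 m a b \<union> Gamma3 m a b) :: 'k mpoly set"
  have main: "\<forall>\<mu> \<nu> (c::'k). hX m \<mu> + hX m \<nu> = n \<longrightarrow> validmon m \<mu> \<longrightarrow> validmon m \<nu> \<longrightarrow>
      phi m a b \<mu> = phi m a b \<nu> \<longrightarrow> Poly_Mapping.single \<mu> c - Poly_Mapping.single \<nu> c \<in> ?I" for n
  proof (induction n rule: less_induct)
    case (less n)
    have step: "Poly_Mapping.single \<mu> c - Poly_Mapping.single \<nu> c \<in> ?I"
      if h: "hX m \<mu> + hX m \<nu> = n" "validmon m \<mu>" "validmon m \<nu>" "phi m a b \<mu> = phi m a b \<nu>"
        "lex_less \<nu> \<mu>" for \<mu> \<nu> c
    proof -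
      obtain \<mu>' g where o: "validmon m \<mu>'" "phi m a b \<mu>' = phi m a b \<nu>" "hX m \<mu>' < hX m \<mu>"
        "Poly_Mapping.single \<mu> c - Poly_Mapping.single \<nu> c
           = g + (Poly_Mapping.single \<mu>' c - Poly_Mapping.single \<nu> (c::'k))"
        "g \<in> ?I"
        using binom_step[OF ab ba B1 h(2,3,4,5)] by blast
      have "Poly_Mapping.single \<mu>' c - Poly_Mapping.single \<nu> c \<in> ?I"
        using less.IH[of "hX m \<mu>' + hX m \<nu>"] o(1,2,3) h(1,3) by simp
      then show ?thesis unfolding o(4) by (rule gi_add[OF o(5)])
    qed
    show ?case
    proof (intro allI impI)
      fix \<mu> \<nu> and c :: 'k
      assume h: "hX m \<mu> + hX m \<nu> = n" "validmon m \<mu>" "validmon m \<nu>" "phi m a b \<mu> = phi m a b \<nu>"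
      show "Poly_Mapping.single \<mu> c - Poly_Mapping.single \<nu> c \<in> ?I"
      proof (cases "\<mu> = \<nu>")
        case True then show ?thesis by (simp add: gi_zero)
      next
        case False
        then consider "lex_less \<nu> \<mu>" | "lex_less \<mu> \<nu>" using lex_less_total by blast
        then show ?thesis
        proof cases
          case 1 then show ?thesis using step h by blast
        next
          case 2
          have "Poly_Mapping.single \<nu> (-c) - Poly_Mapping.single \<mu> (-c) \<in> ?I"
            using step[of \<nu> \<mu> "-c"] h 2 by (simp add: add.commute)
          moreover have "Poly_Mapping.single \<nu> (-c) - Poly_Mapping.single \<mu> (-c)
              = Poly_Mapping.single \<mu> c - Poly_Mapping.single \<nu> c"
            by (simp add: single_uminus)
          ultimately show ?thesis by simp
        qed
      qed
    qed
  qed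
  show "validmon m \<mu> \<Longrightarrow> validmon m \<nu> \<Longrightarrow> phi m a b \<mu> = phi m a b \<nu> \<Longrightarrow>
    Poly_Mapping.single \<mu> c - Poly_Mapping.single \<nu> c \<in> ?I"
    using main by blast
qed

lemma expansion: "f = (\<Sum>\<mu>\<in>Poly_Mapping.keys f. Poly_Mapping.single \<mu> (Poly_Mapping.lookup f \<mu>))"
proof (rule poly_mapping_eqI)
  fix x
  have "Poly_Mapping.lookup (\<Sum>\<mu>\<in>Poly_Mapping.keys f. Poly_Mapping.single \<mu> (Poly_Mapping.lookup f \<mu>)) x
      = (\<Sum>\<mu>\<in>Poly_Mapping.keys f. if \<mu> = x then Poly_Mapping.lookup f \<mu> else 0)"
    by (simp add: lookup_sum lookup_single_var)
  also have "\<dots> = Poly_Mapping.lookup f x" by (simp add: in_keys_iff)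
  finally show "Poly_Mapping.lookup f x = Poly_Mapping.lookup (\<Sum>\<mu>\<in>Poly_Mapping.keys f. Poly_Mapping.single \<mu> (Poly_Mapping.lookup f \<mu>)) x"
    by simp
qed

lemma lookup_Psi: "Poly_Mapping.lookup (Psi m a b f) \<theta>
    = (\<Sum>\<mu>\<in>Poly_Mapping.keys f. if phi m a b \<mu> = \<theta> then Poly_Mapping.lookup f \<mu> else 0)"
  by (simp add: Psi_def lookup_sum lookup_single_var)

lemma single_sum: "finite A \<Longrightarrow> Poly_Mapping.single k (sum h A) = (\<Sum>x\<in>A. Poly_Mapping.single k (h x))"
  by (induction A rule: finite_induct) (simp_all add: single_add)

lemma L_Psi: "f \<in> rees_ideal m a b \<Longrightarrow> Psi m a b f = 0"
  unfolding rees_ideal_def by (simp add: poly_subst_Psi)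

lemma L_sub:
  assumes ab: "\<forall>i\<in>{1..m}. b i < a i" and ba: "\<forall>i\<in>{1..m}. (\<Sum>j\<in>{1..m}. b j) \<le> a i"
    and B1: "1 \<le> (\<Sum>j\<in>{1..m}. b j)"
    and f: "(f::'k::field mpoly) \<in> rees_ideal m a b"
  shows "f \<in> gen_ideal (S_ring m) (Gamma0 m a b \<union> Gamma3 m a b)"
proof -
  let ?K = "Poly_Mapping.keys f"
  let ?I = "gen_ideal (S_ring m) (Gamma0 m a b \<union> Gamma3 m a b) :: 'k mpoly set"
  define rep where "rep \<theta> = (SOME \<nu>. \<nu> \<in> ?K \<and> phi m a b \<nu> = \<theta>)" for \<theta>
  have rep: "rep (phi m a b \<mu>) \<in> ?K \<and> phi m a b (rep (phi m a b \<mu>)) = phi m a b \<mu>" if "\<mu> \<in> ?K" for \<mu>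
    unfolding rep_def by (rule someI[of _ \<mu>]) (use that in simp)
  have vK: "validmon m \<mu>" if "\<mu> \<in> ?K" for \<mu>
    using f that unfolding rees_ideal_def S_ring_validmon by blast
  have Pf: "Psi m a b f = 0" by (rule L_Psi[OF f])
  have fib0: "(\<Sum>\<mu>\<in>{x \<in> ?K. phi m a b x = \<theta>}. Poly_Mapping.lookup f \<mu>) = 0" for \<theta>
  proof -
    have "(\<Sum>\<mu>\<in>{x \<in> ?K. phi m a b x = \<theta>}. Poly_Mapping.lookup f \<mu>) = Poly_Mapping.lookup (Psi m a b f) \<theta>"
      unfolding lookup_Psi by (rule sum.inter_filter) simp
    then show ?thesis using Pf by simp
  qed
  have zero: "(\<Sum>\<mu>\<in>?K. Poly_Mapping.single (rep (phi m a b \<mu>)) (Poly_Mapping.lookup f \<mu>)) = 0"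
  proof -
    have "(\<Sum>\<mu>\<in>?K. Poly_Mapping.single (rep (phi m a b \<mu>)) (Poly_Mapping.lookup f \<mu>))
        = (\<Sum>\<theta>\<in>phi m a b ` ?K. \<Sum>\<mu>\<in>{x \<in> ?K. phi m a b x = \<theta>}. Poly_Mapping.single (rep (phi m a b \<mu>)) (Poly_Mapping.lookup f \<mu>))"
      by (rule sum.group[symmetric]) auto
    also have "\<dots> = (\<Sum>\<theta>\<in>phi m a b ` ?K. Poly_Mapping.single (rep \<theta>) (\<Sum>\<mu>\<in>{x \<in> ?K. phi m a b x = \<theta>}. Poly_Mapping.lookup f \<mu>))"
    proof (rule sum.cong[OF refl])
      fix \<theta> assume "\<theta> \<in> phi m a b ` ?K"
      have "(\<Sum>\<mu>\<in>{x \<in> ?K. phi m a b x = \<theta>}. Poly_Mapping.single (rep (phi m a b \<mu>)) (Poly_Mapping.lookup f \<mu>))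
          = (\<Sum>\<mu>\<in>{x \<in> ?K. phi m a b x = \<theta>}. Poly_Mapping.single (rep \<theta>) (Poly_Mapping.lookup f \<mu>))"
        by (rule sum.cong) auto
      also have "\<dots> = Poly_Mapping.single (rep \<theta>) (\<Sum>\<mu>\<in>{x \<in> ?K. phi m a b x = \<theta>}. Poly_Mapping.lookup f \<mu>)"
        by (rule single_sum[symmetric]) simp
      finally show "(\<Sum>\<mu>\<in>{x \<in> ?K. phi m a b x = \<theta>}. Poly_Mapping.single (rep (phi m a b \<mu>)) (Poly_Mapping.lookup f \<mu>))
          = Poly_Mapping.single (rep \<theta>) (\<Sum>\<mu>\<in>{x \<in> ?K. phi m a b x = \<theta>}. Poly_Mapping.lookup f \<mu>)" .
    qed
    also have "\<dots> = 0" by (simp add: fib0)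
    finally show ?thesis .
  qed
  have "f = (\<Sum>\<mu>\<in>?K. Poly_Mapping.single \<mu> (Poly_Mapping.lookup f \<mu>))" by (rule expansion)
  also have "\<dots> = (\<Sum>\<mu>\<in>?K. Poly_Mapping.single \<mu> (Poly_Mapping.lookup f \<mu>) - Poly_Mapping.single (rep (phi m a b \<mu>)) (Poly_Mapping.lookup f \<mu>))
      + (\<Sum>\<mu>\<in>?K. Poly_Mapping.single (rep (phi m a b \<mu>)) (Poly_Mapping.lookup f \<mu>))"
    by (simp add: sum_subtractf)
  also have "\<dots> = (\<Sum>\<mu>\<in>?K. Poly_Mapping.single \<mu> (Poly_Mapping.lookup f \<mu>) - Poly_Mapping.single (rep (phi m a b \<mu>)) (Poly_Mapping.lookup f \<mu>))"
    using zero by simp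
  finally have feq: "f = \<dots>" .
  have "(\<Sum>\<mu>\<in>?K. Poly_Mapping.single \<mu> (Poly_Mapping.lookup f \<mu>) - Poly_Mapping.single (rep (phi m a b \<mu>)) (Poly_Mapping.lookup f \<mu>)) \<in> ?I"
  proof (rule gi_sum)
    show "finite ?K" by simp
    show "\<forall>\<mu>\<in>?K. Poly_Mapping.single \<mu> (Poly_Mapping.lookup f \<mu>) - Poly_Mapping.single (rep (phi m a b \<mu>)) (Poly_Mapping.lookup f \<mu>) \<in> ?I"
    proof
      fix \<mu> assume mu: "\<mu> \<in> ?K"
      show "Poly_Mapping.single \<mu> (Poly_Mapping.lookup f \<mu>) - Poly_Mapping.single (rep (phi m a b \<mu>)) (Poly_Mapping.lookup f \<mu>) \<in> ?I"
        by (rule binom_in[OF ab ba B1 vK[OF mu]]) (use rep[OF mu] vK in auto)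
    qed
  qed
  then show ?thesis using feq by simp
qed

lemma finite_Gamma0: "finite (Gamma0 m a b)"
proof (rule finite_subset)
  show "Gamma0 m a b \<subseteq> (\<lambda>p. Pcal m a b (Xmon (fst p)) (Xmon (snd p))) ` ({0..m+1} \<times> {0..m+1})"
    unfolding Gamma0_def by force
qed simp

lemma finite_Gamma3: "finite (Gamma3 m a b)"
proof (rule finite_subset)
  show "Gamma3 m a b \<subseteq> (\<lambda>c. Pcal m a b (Wt m (\<Sum>i\<in>{1..m}. c i)) (Nc m c)) ` (PiE {1..m} (\<lambda>i. {0..b i}))"
  proof
    fix g assume "g \<in> Gamma3 m a b"
    then obtain c where g: "g = Pcal m a b (Poly_Mapping.single (XV (m+1)) (\<Sum>i\<in>{1..m}. c i))
                               (\<Sum>i\<in>{1..m}. Poly_Mapping.single (XV i) (c i))"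
       and c: "\<forall>i\<in>{1..m}. c i \<le> b i"
      unfolding Gamma3_def by blast
    define c' where "c' = restrict c {1..m}"
    have "c' \<in> PiE {1..m} (\<lambda>i. {0..b i})" unfolding c'_def using c by auto
    moreover have "(\<Sum>i\<in>{1..m}. c' i) = (\<Sum>i\<in>{1..m}. c i)" unfolding c'_def by (rule sum.cong) auto
    moreover have "Nc m c' = Nc m c" unfolding c'_def Nc_def by (rule sum.cong) auto
    ultimately show "g \<in> (\<lambda>c. Pcal m a b (Wt m (\<Sum>i\<in>{1..m}. c i)) (Nc m c)) ` (PiE {1..m} (\<lambda>i. {0..b i}))"
      unfolding g Wt_def Nc_def by (metis (no_types, lifting) image_eqI)
  qed
  show "finite ((\<lambda>c. Pcal m a b (Wt m (\<Sum>i\<in>{1..m}. c i)) (Nc m c)) ` (PiE {1..m} (\<lambda>i. {0..b i})))"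
    by (rule finite_imageI, rule finite_PiE) auto
qed

lemma GB_prop:
  assumes ab: "\<forall>i\<in>{1..m}. b i < a i" and ba: "\<forall>i\<in>{1..m}. (\<Sum>j\<in>{1..m}. b j) \<le> a i"
    and B1: "1 \<le> (\<Sum>j\<in>{1..m}. b j)"
    and f: "(f::'k::field mpoly) \<in> rees_ideal m a b" and f0: "f \<noteq> 0"
  shows "\<exists>g\<in>(Gamma0 m a b \<union> Gamma3 m a b :: 'k mpoly set). g \<noteq> 0 \<and> mon_dvd (lead_mon g) (lead_mon f)"
proof -
  let ?K = "Poly_Mapping.keys f"
  define M where "M = lead_mon f"
  have M: "M \<in> ?K" "\<forall>B\<in>?K. B \<noteq> M \<longrightarrow> lex_less B M" using lead_mon_prop[OF f0] unfolding M_def by auto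
  have vK: "validmon m \<mu>" if "\<mu> \<in> ?K" for \<mu>
    using f that unfolding rees_ideal_def S_ring_validmon by blast
  have "\<exists>\<nu>\<in>?K. \<nu> \<noteq> M \<and> phi m a b \<nu> = phi m a b M"
  proof (rule ccontr)
    assume "\<not> (\<exists>\<nu>\<in>?K. \<nu> \<noteq> M \<and> phi m a b \<nu> = phi m a b M)"
    then have h: "\<forall>\<nu>\<in>?K. phi m a b \<nu> = phi m a b M \<longleftrightarrow> \<nu> = M" by blast
    have "Poly_Mapping.lookup (Psi m a b f) (phi m a b M) = (\<Sum>\<mu>\<in>?K. if \<mu> = M then Poly_Mapping.lookup f \<mu> else 0)"
      unfolding lookup_Psi by (rule sum.cong) (use h in auto)
    also have "\<dots> = Poly_Mapping.lookup f M" using M(1) by simp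
    finally have "Poly_Mapping.lookup f M = 0" using L_Psi[OF f] by simp
    then show False using M(1) by (simp add: in_keys_iff)
  qed
  then obtain \<nu> where nu: "\<nu> \<in> ?K" "\<nu> \<noteq> M" "phi m a b \<nu> = phi m a b M" by blast
  have lt: "lex_less \<nu> M" using M(2) nu by blast
  obtain g A B where g: "g \<in> Gamma0 m a b \<union> Gamma3 m a b" "good m a b (g::'k mpoly) A B" "mon_dvd A M"
    using combo[OF ab ba B1 vK[OF M(1)] vK[OF nu(1)] nu(3)[symmetric] lt] by blast
  have gl: "lead_mon g = A" "g \<noteq> 0" by (rule good_lead[OF g(2)])+
  have "g \<noteq> 0 \<and> mon_dvd (lead_mon g) (lead_mon f)"
    unfolding gl(1) M_def[symmetric] using gl(2) g(3) by (rule conjI)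
  with g(1) show ?thesis by (rule bexI[rotated])
qed

theorem theorem4p1:
  fixes m :: nat and a b :: "nat \<Rightarrow> nat"
  assumes "m \<ge> 3"
    and "\<forall>i\<in>{1..m}. b i < a i"
    and "card {i\<in>{1..m}. b i \<noteq> 0} \<ge> 2"
    and "\<forall>i\<in>{1..m}. (\<Sum>j\<in>{1..m}. b j) \<le> a i"
  shows "is_groebner_basis (Gamma0 m a b \<union> Gamma3 m a b)
           (rees_ideal m a b :: ('k::field) mpoly set)
         \<and> reltype m a b TYPE('k) \<le> enat (\<Sum>i\<in>{1..m}. b i)"
proof -
  note ab = assms(2) and ba = assms(4)
  have "{i\<in>{1..m}. b i \<noteq> 0} \<noteq> {}" using assms(3) by (metis card.empty not_numeral_le_zero)
  then obtain i0 where i0: "i0 \<in> {1..m}" "b i0 \<noteq> 0" by blast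
  have "b i0 \<le> (\<Sum>j\<in>{1..m}. b j)" by (rule member_le_sum) (use i0 in auto)
  then have B1: "1 \<le> (\<Sum>j\<in>{1..m}. b j)" using i0(2) by simp
  let ?G = "Gamma0 m a b \<union> Gamma3 m a b :: 'k mpoly set"
  let ?L = "rees_ideal m a b :: 'k mpoly set"
  have GL: "?G \<subseteq> ?L"
  proof
    fix g assume "g \<in> ?G"
    then obtain A B where "good m a b g A B" using all_good[OF _ B1] by blast
    then show "g \<in> ?L" by (rule good_in_L)
  qed
  have GB: "is_groebner_basis ?G ?L"
    unfolding is_groebner_basis_def
    using finite_Gamma0 finite_Gamma3 GL GB_prop[OF ab ba B1] by blast
  let ?U = "\<Union>i\<in>{1..(\<Sum>j\<in>{1..m}. b j)}. graded_part m ?L i"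
  have GU: "?G \<subseteq> ?U"
  proof
    fix g assume "g \<in> ?G"
    then obtain A B where gd: "good m a b g A B" using all_good[OF _ B1] by blast
    then have "g \<in> graded_part m ?L (degXW m A)" by (rule good_graded)
    moreover have "degXW m A \<in> {1..(\<Sum>j\<in>{1..m}. b j)}" using gd unfolding good_def by simp
    ultimately show "g \<in> ?U" by blast
  qed
  have UL: "?U \<subseteq> ?L" unfolding graded_part_def by blast
  have eqL: "?L = gen_ideal (S_ring m) ?U"
  proof
    show "?L \<subseteq> gen_ideal (S_ring m) ?U"
    proof
      fix f assume "f \<in> ?L"
      then have "f \<in> gen_ideal (S_ring m) ?G" by (rule L_sub[OF ab ba B1])
      then show "f \<in> gen_ideal (S_ring m) ?U" using gi_mono[OF GU] by blast
    qed
    show "gen_ideal (S_ring m) ?U \<subseteq> ?L" by (rule gi_L[OF UL])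
  qed
  have "reltype m a b TYPE('k) \<le> enat (\<Sum>i\<in>{1..m}. b i)"
    unfolding reltype_def
    by (rule INF_lower) (use eqL in simp)
  then show ?thesis using GB by simp
qed

end
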